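(* In the reinforcement-learning network model described in the context, the expected payoff process $(H(x_n))_{n\in\mathbb{N}}$ converges almost surely.
   Context: Let $G=(\mathbb{V},E)$ be a finite graph with adjacency $i\sim j$ and (unordered) edge set $E$. Let $(a_{ij})_{i,j\in\mathbb{V}}$ be nonnegative reals with $a_{ij}=a_{ji}$ and $a_{ij}>0$ only if $i\sim j$ (affinities). Let $(p_W)_{W\subseteq\mathbb{V}}$ be nonnegative reals with $\sum_W p_W=1$; for $i\sim j$ put $p_{ij}=\sum_{W\subseteq \mathbb{V}:\, i,j\in W}p_W$, and $p_{ij}=0$ if $i\not\sim j$. Assume there exist $i,j$ with $a_{ij}p_{ij}>0$. Let $v^0_{ij}=v^0_{ji}\ge 0$ with $v^0_{ij}>0$ iff $i\sim j$. The random process: $V^0_{ij}=v^0_{ij}$, $V^n_{ij}=0$ if $i\not\sim j$, $V_i^n=\sum_j V_{ij}^n$. At each time $n$, each vertex $i$ independently chooses one neighbour $j$ with probability $V_{ij}^n/V_i^n$; independently, Nature picks a random subset $W_n\subseteq\mathbb{V}$ with $\mathbb{P}(W_n=W)=p_W$, i.i.d. in $n$; if $i,j\in W_n$, $i\sim j$ and $i,j$ choose each other, then $V^{n+1}_{ij}=V^{n+1}_{ji}=V^n_{ij}+a_{ij}$, otherwise $V^{n+1}_{ij}=V^n_{ij}$. Hence $\mathbb{P}(V_{ij}^{n+1}=V_{ij}^n+a_{ij}\mid\mathcal{F}_n)=p_{ij}(V_{ij}^n)^2/(V_i^nV_j^n)$, with $\mathcal{F}_n$ the natural filtration. Let $T_n=\sum_{i,j\in\mathbb{V}}V_{ij}^n$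 (sum over ordered pairs), $x_{ij}^n=V_{ij}^n/T_n$, $x_i^n=V_i^n/T_n$, $x_n=(x^n_{ij})_{i,j}$. For an array $x=(x_{ij})$ with $x_{ij}=x_{ji}\ge0$, let $x_i=\sum_j x_{ij}$ and $H(x)=\sum_{(i,j):\,x_{ij}>0}a_{ij}p_{ij}\frac{x_{ij}^2}{x_ix_j}$ (the expected payoff). *)

theory Defs
  imports "HOL-Probability.Probability"
begin

definition vsum :: "('v::finite \<Rightarrow> 'v \<Rightarrow> real) \<Rightarrow> 'v \<Rightarrow> real" where
  "vsum V i = (\<Sum>j\<in>UNIV. V i j)"

definition total :: "('v::finite \<Rightarrow> 'v \<Rightarrow> real) \<Rightarrow> real" where
  "total V = (\<Sum>i\<in>UNIV. \<Sum>j\<in>UNIV. V i j)"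

definition normalise :: "('v::finite \<Rightarrow> 'v \<Rightarrow> real) \<Rightarrow> ('v \<Rightarrow> 'v \<Rightarrow> real)" where
  "normalise V = (\<lambda>i j. V i j / total V)"

definition pedge :: "('v \<Rightarrow> 'v \<Rightarrow> bool) \<Rightarrow> ('v::finite set \<Rightarrow> real) \<Rightarrow> 'v \<Rightarrow> 'v \<Rightarrow> real" where
  "pedge adj pW i j = (if adj i j then (\<Sum>W\<in>{W. i \<in> W \<and> j \<in> W}. pW W) else 0)"

definition payoff :: "('v \<Rightarrow> 'v \<Rightarrow> bool) \<Rightarrow> ('v \<Rightarrow> 'v \<Rightarrow> real) \<Rightarrow> ('v::finite set \<Rightarrow> real)
     \<Rightarrow> ('v \<Rightarrow> 'v \<Rightarrow> real) \<Rightarrow> real" where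
  "payoff adj a pW x =
     (\<Sum>(i,j)\<in>{(i,j). x i j > 0}. a i j * pedge adj pW i j * (x i j)\<^sup>2 / (vsum x i * vsum x j))"

text \<open>Choice of vertex i: neighbour j with probability V_ij / V_i (irrelevant if V_i = 0).\<close>
definition choice :: "('v::finite \<Rightarrow> 'v \<Rightarrow> real) \<Rightarrow> 'v \<Rightarrow> 'v pmf" where
  "choice V i = (if vsum V i > 0 \<and> (\<forall>j. V i j \<ge> 0)
                 then embed_pmf (\<lambda>j. V i j / vsum V i) else return_pmf i)"

definition Wdist :: "('v set \<Rightarrow> real) \<Rightarrow> 'v set pmf" where
  "Wdist pW = embed_pmf pW"

definition step :: "('v \<Rightarrow> 'v \<Rightarrow> bool) \<Rightarrow> ('v \<Rightarrow> 'v \<Rightarrow> real) \<Rightarrow> ('v::finite set \<Rightarrow> real)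
     \<Rightarrow> ('v \<Rightarrow> 'v \<Rightarrow> real) \<Rightarrow> ('v \<Rightarrow> 'v \<Rightarrow> real) pmf" where
  "step adj a pW V =
     Pi_pmf UNIV undefined (choice V) \<bind> (\<lambda>c. Wdist pW \<bind> (\<lambda>W.
       return_pmf (\<lambda>i j. if adj i j \<and> i \<in> W \<and> j \<in> W \<and> c i = j \<and> c j = i
                        then V i j + a i j else V i j)))"

end

theory Submission
  imports Defs
begin


definition FF :: "('v \<Rightarrow> 'v \<Rightarrow> bool) \<Rightarrow> ('v \<Rightarrow> 'v \<Rightarrow> real) \<Rightarrow> ('v \<Rightarrow> 'v \<Rightarrow> real) \<Rightarrow> ('v \<Rightarrow> 'v) \<Rightarrow> 'v set \<Rightarrow> ('v \<Rightarrow> 'v \<Rightarrow> real)" where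
  "FF adj a s c W = (\<lambda>i j. if adj i j \<and> i \<in> W \<and> j \<in> W \<and> c i = j \<and> c j = i then s i j + a i j else s i j)"

lemma step_alt: "step adj a pW s = map_pmf (\<lambda>(c,W). FF adj a s c W) (pair_pmf (Pi_pmf UNIV undefined (choice s)) (Wdist pW))"
  unfolding step_def pair_pmf_def map_pmf_def FF_def
  by (simp add: bind_assoc_pmf bind_return_pmf)

lemma set_step: "set_pmf (step adj a pW s) \<subseteq> range (\<lambda>(c,W). FF adj a s c W)"
  unfolding step_alt by auto

lemma finite_set_step: "finite (set_pmf (step adj a pW (s::'v::finite \<Rightarrow> 'v \<Rightarrow> real)))"
  by (rule finite_subset[OF set_step]) auto

lemma step_sum:
  fixes s :: "'v::finite \<Rightarrow> 'v \<Rightarrow> real"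
  shows "(\<Sum>t\<in>set_pmf (step adj a pW s). pmf (step adj a pW s) t * \<phi> t) =
    (\<Sum>c\<in>UNIV. \<Sum>W\<in>UNIV. pmf (Pi_pmf UNIV undefined (choice s)) c * pmf (Wdist pW) W * \<phi> (FF adj a s c W))"
proof -
  have "(\<Sum>t\<in>set_pmf (step adj a pW s). pmf (step adj a pW s) t * \<phi> t) = measure_pmf.expectation (step adj a pW s) \<phi>"
    by (subst integral_measure_pmf_real[OF finite_set_step]) (auto simp: mult.commute)
  also have "\<dots> = measure_pmf.expectation (pair_pmf (Pi_pmf UNIV undefined (choice s)) (Wdist pW)) (\<lambda>x. \<phi> ((\<lambda>(c,W). FF adj a s c W) x))"
    unfolding step_alt by simp
  also have "\<dots> = (\<Sum>x\<in>UNIV. (\<phi> ((\<lambda>(c,W). FF adj a s c W) x)) * pmf (pair_pmf (Pi_pmf UNIV undefined (choice s)) (Wdist pW)) x)"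
    by (rule integral_measure_pmf_real) auto
  also have "\<dots> = (\<Sum>c\<in>UNIV. \<Sum>W\<in>UNIV. pmf (Pi_pmf UNIV undefined (choice s)) c * pmf (Wdist pW) W * \<phi> (FF adj a s c W))"
    unfolding UNIV_Times_UNIV[symmetric] sum.cartesian_product
    by (intro sum.cong refl) (auto simp: pmf_pair mult_ac case_prod_beta)
  finally show ?thesis .
qed


lemma pmf_Wdist:
  fixes pW :: "'v::finite set \<Rightarrow> real"
  assumes "\<And>W. pW W \<ge> 0" "(\<Sum>W\<in>UNIV. pW W) = 1"
  shows "pmf (Wdist pW) W = pW W"
proof -
  have "(\<integral>\<^sup>+x. ennreal (pW x) \<partial>count_space UNIV) = 1"
    using assms by (simp add: nn_integral_count_space_finite sum_ennreal)
  then show ?thesis unfolding Wdist_def using assms by (subst pmf_embed_pmf) auto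
qed

lemma pmf_choice:
  fixes s :: "'v::finite \<Rightarrow> 'v \<Rightarrow> real"
  assumes "\<And>i j. s i j \<ge> 0" "vsum s i > 0"
  shows "pmf (choice s i) j = s i j / vsum s i"
proof -
  have "(\<integral>\<^sup>+x. ennreal (s i x / vsum s i) \<partial>count_space UNIV) = 1"
    using assms by (simp add: nn_integral_count_space_finite sum_ennreal sum_divide_distrib[symmetric] vsum_def)
  moreover have "0 < vsum s i \<and> (\<forall>j. 0 \<le> s i j)" using assms by auto
  ultimately show ?thesis unfolding choice_def using assms by (simp add: pmf_embed_pmf)
qed

lemma prob_mutual:
  fixes s :: "'v::finite \<Rightarrow> 'v \<Rightarrow> real"
  assumes "\<And>i j. s i j \<ge> 0" "vsum s i > 0" "vsum s j > 0" "i \<noteq> j"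
  shows "(\<Sum>c\<in>UNIV. pmf (Pi_pmf UNIV undefined (choice s)) c * (if c i = j \<and> c j = i then 1 else 0))
     = (s i j / vsum s i) * (s j i / vsum s j)"
proof -
  define B where "B = (\<lambda>x. if x = i then {j} else if x = j then {i} else (UNIV::'v set))"
  have "(\<Sum>c\<in>UNIV. pmf (Pi_pmf UNIV undefined (choice s)) c * (if c i = j \<and> c j = i then 1 else 0))
      = (\<Sum>c\<in>{c. c i = j \<and> c j = i}. pmf (Pi_pmf UNIV undefined (choice s)) c)"
    by (rule sum.mono_neutral_cong_right) auto
  also have "\<dots> = measure_pmf.prob (Pi_pmf UNIV undefined (choice s)) {c. c i = j \<and> c j = i}"
    by (rule measure_measure_pmf_finite[symmetric]) auto
  also have "{c. c i = j \<and> c j = i} = Pi UNIV B"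
    using assms(4) by (auto simp: B_def Pi_def)
  also have "measure_pmf.prob (Pi_pmf UNIV undefined (choice s)) (Pi UNIV B) = (\<Prod>x\<in>UNIV. measure_pmf.prob (choice s x) (B x))"
    by (rule measure_Pi_pmf_Pi) auto
  also have "\<dots> = (\<Prod>x\<in>{i,j}. measure_pmf.prob (choice s x) (B x))"
    by (rule prod.mono_neutral_right) (auto simp: B_def)
  also have "\<dots> = pmf (choice s i) j * pmf (choice s j) i"
    using assms(4) by (simp add: B_def measure_pmf_single)
  also have "\<dots> = (s i j / vsum s i) * (s j i / vsum s j)"
    using assms by (simp add: pmf_choice)
  finally show ?thesis .
qed

lemma expect_entry:
  fixes s :: "'v::finite \<Rightarrow> 'v \<Rightarrow> real"
  assumes pW: "\<And>W. pW W \<ge> 0" "(\<Sum>W\<in>UNIV. pW W) = 1"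
    and s: "\<And>i j. s i j \<ge> 0" "vsum s i > 0" "vsum s j > 0" and adj: "adj i j" "i \<noteq> j"
  shows "(\<Sum>c\<in>UNIV. \<Sum>W\<in>UNIV. pmf (Pi_pmf UNIV undefined (choice s)) c * pmf (Wdist pW) W * FF adj a s c W i j)
     = s i j + a i j * pedge adj pW i j * ((s i j / vsum s i) * (s j i / vsum s j))"
proof -
  let ?pc = "pmf (Pi_pmf UNIV undefined (choice s))"
  have sc: "(\<Sum>c\<in>UNIV. ?pc c) = 1" by (rule sum_pmf_eq_1) auto
  have pe: "pedge adj pW i j = (\<Sum>W\<in>UNIV. pW W * (if i \<in> W \<and> j \<in> W then 1 else 0))"
    using adj unfolding pedge_def by (auto intro!: sum.mono_neutral_cong_left split: if_splits)
  have "(\<Sum>c\<in>UNIV. \<Sum>W\<in>UNIV. ?pc c * pmf (Wdist pW) W * FF adj a s c W i j)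
      = (\<Sum>c\<in>UNIV. \<Sum>W\<in>UNIV. ?pc c * pW W * s i j + a i j * ((?pc c * (if c i = j \<and> c j = i then 1 else 0)) * (pW W * (if i \<in> W \<and> j \<in> W then 1 else 0))))"
    using adj by (intro sum.cong refl) (auto simp: FF_def pmf_Wdist[OF pW] algebra_simps)
  also have "\<dots> = (\<Sum>c\<in>UNIV. ?pc c) * (\<Sum>W\<in>UNIV. pW W) * s i j + a i j * ((\<Sum>c\<in>UNIV. ?pc c * (if c i = j \<and> c j = i then 1 else 0)) * (\<Sum>W\<in>UNIV. pW W * (if i \<in> W \<and> j \<in> W then 1 else 0)))"
    by (simp add: sum.distrib sum_distrib_left sum_distrib_right mult_ac)
  also have "\<dots> = s i j + a i j * pedge adj pW i j * ((s i j / vsum s i) * (s j i / vsum s j))"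
    using sc pW(2) pe prob_mutual[OF s adj(2)] by simp
  finally show ?thesis .
qed


lemma q_bound:
  fixes y z d1 d2 :: real
  assumes "y > 0" "z > 0" "d1 \<ge> 0" "d2 \<ge> 0"
  shows "y*z/((y+d1)*(z+d2)) \<ge> 1 - d1/y - d2/z" and "y*z/((y+d1)*(z+d2)) \<le> 1"
    and "y*z/((y+d1)*(z+d2)) \<ge> 0"
proof -
  define u where "u = d1/y" define w where "w = d2/z"
  have u: "u \<ge> 0" "d1 = u*y" and w: "w \<ge> 0" "d2 = w*z" using assms by (auto simp: u_def w_def)
  have e: "(y+d1)*(z+d2) = y*z*((1+u)*(1+w))" by (simp add: u w algebra_simps)
  have pos: "y*z > 0" using assms by simp
  have "(1-u-w)*((1+u)*(1+w)) \<le> 1"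
  proof -
    have eq: "(1-u-w)*((1+u)*(1+w)) = 1 + u*w - (u+w)*(u+w) - (u+w)*(u*w)" by (simp add: algebra_simps)
    have "u*w \<le> (u+w)*(u+w)" using u w by (simp add: algebra_simps mult_nonneg_nonneg)
    moreover have "0 \<le> (u+w)*(u*w)" using u w by simp
    ultimately show ?thesis unfolding eq by linarith
  qed
  moreover have pp: "(1+u)*(1+w) > 0" using u w by (simp add: add_pos_nonneg)
  ultimately have "1 - u - w \<le> 1/((1+u)*(1+w))" by (simp add: field_simps)
  also have "1/((1+u)*(1+w)) = y*z/((y+d1)*(z+d2))" proof -
    have "y \<noteq> 0" "z \<noteq> 0" "1+u \<noteq> 0" "1+w \<noteq> 0" using assms u w by auto
    then show ?thesis unfolding e by (simp add: divide_simps)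
  qed
  finally show "y*z/((y+d1)*(z+d2)) \<ge> 1 - d1/y - d2/z" by (simp add: u_def w_def)
  have "1 \<le> (1+u)*(1+w)" using u w by (simp add: algebra_simps)
  then show "y*z/((y+d1)*(z+d2)) \<le> 1" using pos by (simp add: e)
  show "y*z/((y+d1)*(z+d2)) \<ge> 0" using assms by simp
qed

lemma pair_bounds:
  fixes x y z d1 d2 e :: real
  assumes x: "0 < x" "x \<le> y" "x \<le> z" and d: "d1 \<ge> 0" "d2 \<ge> 0"
    and e: "e = 0 \<or> (e = d1 \<and> e = d2)"
  defines "u \<equiv> d1/y" and "w \<equiv> d2/z"
  shows "\<bar>(x+e)^2/((y+d1)*(z+d2)) - x^2/(y*z)\<bar> \<le> 3*(u+w)"
    and "(x+e)^2/((y+d1)*(z+d2)) - x^2/(y*z) - x^2/(y*z) * (2*e/x - u - w) \<ge> -6*(u^2+w^2)"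
proof -
  have y: "y > 0" and z: "z > 0" using x by auto
  define q where "q = y*z/((y+d1)*(z+d2))"
  have q: "q \<ge> 1 - u - w" "q \<le> 1" "q \<ge> 0" using q_bound[OF y z d] by (auto simp: q_def u_def w_def)
  have u: "u \<ge> 0" and w: "w \<ge> 0" using y z d by (auto simp: u_def w_def)
  define g where "g = x^2/(y*z)"
  have g: "0 \<le> g" "g \<le> 1"
  proof -
    show "0 \<le> g" using y z by (simp add: g_def)
    have "x*x \<le> y*z" using x by (intro mult_mono) auto
    then show "g \<le> 1" using y z by (simp add: g_def power2_eq_square)
  qed
  define G where "G = (x+e)^2/((y+d1)*(z+d2))"
  have g': "G = (x+e)^2/(y*z) * q"
    using y z d by (simp add: q_def G_def)
  have ee: "e \<ge> 0" using e d by auto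
  have xy: "x/y \<le> 1" "x/y \<ge> 0" using x y by auto
  have w2: "2*(x/y)*w \<le> 2*w"
  proof -
    have "(x/y)*w \<le> 1*w" using xy w by (intro mult_right_mono) auto
    then show ?thesis by simp
  qed
  have eu: "e^2/(y*z) = (if e = 0 then 0 else u*w)" "2*e*x/(y*z) = (if e = 0 then 0 else 2*(x/y)*w)"
    using e y z by (auto simp: u_def w_def power2_eq_square)
  have lin: "x^2/(y*z) * (2*e/x - u - w) = 2*e*x/(y*z) - g*(u+w)"
    using x y z by (simp add: g_def field_simps power2_eq_square)
  have sq: "(x+e)^2/(y*z) = g + 2*e*x/(y*z) + e^2/(y*z)"
    using y z by (simp add: g_def field_simps power2_eq_square)
  have uw0: "0 \<le> u*w" using u w by simp
  have "0 \<le> 2*(x/y)*w" using xy w by (intro mult_nonneg_nonneg) auto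
  then have sqg: "(x+e)^2/(y*z) \<ge> g" using sq eu uw0 by (auto split: if_splits)
  have G1: "G \<le> 1"
  proof -
    have "(x+e)*(x+e) \<le> (y+d1)*(z+d2)" using x e d by (intro mult_mono) auto
    then show ?thesis using y z d by (simp add: G_def power2_eq_square)
  qed
  have G0: "G \<ge> 0" using y z d by (simp add: G_def)
  have gq: "g*q \<ge> g*(1-u-w)" using q g by (intro mult_left_mono) auto
  have low: "G \<ge> g * q"
    unfolding g' using q sqg by (intro mult_right_mono) auto
  have guw: "g*(u+w) \<le> u + w" using g u w by (simp add: mult_left_le_one_le)
  show "\<bar>(x+e)^2/((y+d1)*(z+d2)) - x^2/(y*z)\<bar> \<le> 3*(u+w)"
  proof -
    have A: "g - G \<le> 3*(u+w)"
    proof -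
      have "g*(1-u-w) = g - g*(u+w)" by (simp add: algebra_simps)
      then show ?thesis using low gq guw u w by argo
    qed
    have B: "G - g \<le> 3*(u+w)"
    proof (cases "u \<le> 1")
      case True
      have "G \<le> (x+e)^2/(y*z)" unfolding g' using q y z
        by (intro mult_left_le) auto
      also have "\<dots> = g + 2*e*x/(y*z) + e^2/(y*z)" by (rule sq)
      also have "\<dots> \<le> g + 3*w"
      proof -
        have "u*w \<le> w" using True w u by (simp add: mult_left_le_one_le)
        then show ?thesis using eu w2 w by auto
      qed
      finally show ?thesis using u by simp
    next
      case False
      then show ?thesis using G1 g u w by simp
    qed
    show ?thesis using A B by (simp add: g_def G_def abs_le_iff)
  qed
  have main: "G - g - (2*e*x/(y*z) - g*(u+w)) \<ge> -6*(u^2+w^2)"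
  proof (cases "e = 0")
    case True
    have "g*(1-u-w) = g - g*(u+w)" by (simp add: algebra_simps)
    moreover have "0 \<le> u^2+w^2" by simp
    moreover have "2*e*x/(y*z) = 0" using True by simp
    ultimately show "G - g - (2*e*x/(y*z) - g*(u+w)) \<ge> -6*(u^2+w^2)" using low gq by argo
  next
    case False
    then have eu2: "e^2/(y*z) = u*w" "2*e*x/(y*z) = 2*(x/y)*w" using eu by auto
    show "G - g - (2*e*x/(y*z) - g*(u+w)) \<ge> -6*(u^2+w^2)"
    proof (cases "u + w \<le> 1")
      case True
      have "G \<ge> (x+e)^2/(y*z) * (1-u-w)"
        unfolding g' using q True y z by (intro mult_left_mono) auto
      then have "G \<ge> (g + 2*(x/y)*w + u*w) * (1-u-w)"
        using sq eu2 by simp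
      moreover have "(g + 2*(x/y)*w + u*w) * (1-u-w) - g - (2*(x/y)*w - g*(u+w))
          = u*w - (u+w)*(2*(x/y)*w + u*w)"
      proof -
        have "\<And>r. (g + 2*r*w + u*w) * (1-u-w) - g - (2*r*w - g*(u+w)) = u*w - (u+w)*(2*r*w + u*w)"
          by (simp add: algebra_simps)
        then show ?thesis .
      qed
      moreover have "u*w - (u+w)*(2*(x/y)*w + u*w) \<ge> -3*(u^2+w^2)"
      proof -
        have "(u+w)*(2*(x/y)*w + u*w) \<le> (u+w)*(2*w + u*w)"
          using w2 u w by (intro mult_left_mono) auto
        also have "\<dots> = 2*u*w + 2*w^2 + (u+w)*(u*w)" by (simp add: algebra_simps power2_eq_square)
        also have "(u+w)*(u*w) \<le> 1*(u*w)" using True u w by (intro mult_right_mono) auto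
        finally have "(u+w)*(2*(x/y)*w + u*w) \<le> 3*u*w + 2*w^2" by simp
        moreover have "2*u*w \<le> u^2 + w^2" using sum_squares_bound[of u w] by simp
        moreover have "0 \<le> u^2" by simp
        ultimately show ?thesis by argo
      qed
      moreover have "0 \<le> u^2+w^2" by simp
      ultimately show ?thesis using eu2 by argo
    next
      case False
      have s1: "(u+w)^2 \<le> 2*(u^2+w^2)" using sum_squares_bound[of u w] by (simp add: power2_sum)
      have "1*1 \<le> (u+w)*(u+w)" using False u w by (intro mult_mono) auto
      then have s2: "1 \<le> (u+w)^2" by (simp add: power2_eq_square)
      have "w*1 \<le> (u+w)*(u+w)" using False u w by (intro mult_mono) auto
      then have s3: "w \<le> (u+w)^2" by (simp add: power2_eq_square)
      have "g*(u+w) \<ge> 0" using g u w by simp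
      then show ?thesis using s1 s2 s3 eu2 w2 G0 g by argo
    qed
  qed
  then show "(x+e)^2/((y+d1)*(z+d2)) - x^2/(y*z) - x^2/(y*z) * (2*e/x - u - w) \<ge> -6*(u^2+w^2)"
    unfolding lin by (simp add: G_def g_def)
qed


locale rls =
  fixes adj :: "'v::finite \<Rightarrow> 'v \<Rightarrow> bool"
    and a :: "'v \<Rightarrow> 'v \<Rightarrow> real"
    and pW :: "'v set \<Rightarrow> real"
    and v0 :: "'v \<Rightarrow> 'v \<Rightarrow> real"
  assumes adj_sym: "\<And>i j. adj i j \<longleftrightarrow> adj j i"
    and adj_irrefl: "\<And>i. \<not> adj i i"
    and a_nonneg: "\<And>i j. a i j \<ge> 0"
    and a_sym: "\<And>i j. a i j = a j i"
    and a_adj: "\<And>i j. a i j > 0 \<Longrightarrow> adj i j"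
    and pW_nonneg: "\<And>W. pW W \<ge> 0"
    and pW_sum: "(\<Sum>W\<in>UNIV. pW W) = 1"
    and nondeg: "\<exists>i j. a i j * pedge adj pW i j > 0"
    and v0_sym: "\<And>i j. v0 i j = v0 j i"
    and v0_nonneg: "\<And>i j. v0 i j \<ge> 0"
    and v0_pos: "\<And>i j. v0 i j > 0 \<longleftrightarrow> adj i j"
begin

definition cc where "cc i j = a i j * pedge adj pW i j"
definition ff where "ff s = (\<Sum>i\<in>UNIV. \<Sum>j\<in>UNIV. cc i j * ((s i j)^2 / (vsum s i * vsum s j)))"
definition Inv where "Inv s \<longleftrightarrow> (\<forall>i j. s i j = s j i) \<and> (\<forall>i j. v0 i j \<le> s i j) \<and> (\<forall>i j. \<not> adj i j \<longrightarrow> s i j = 0)"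
definition Tr where "Tr s t \<longleftrightarrow> (\<forall>i j. t i j = s i j \<or> (adj i j \<and> t i j = s i j + a i j \<and> (\<forall>k. k \<noteq> j \<longrightarrow> t i k = s i k)))"
definition dl where "dl s t i = vsum t i - vsum s i"
definition XX where "XX s t = (\<Sum>i\<in>UNIV. (dl s t i / vsum s i)^2)"
definition Lin where "Lin s t = (\<Sum>i\<in>UNIV. \<Sum>j\<in>UNIV. cc i j * ((s i j)^2 / (vsum s i * vsum s j)) *
    (2*(t i j - s i j)/s i j - dl s t i / vsum s i - dl s t j / vsum s j))"
definition CC where "CC = (\<Sum>i\<in>UNIV. \<Sum>j\<in>UNIV. cc i j)"
definition EE where "EE s \<psi> = (\<Sum>t\<in>set_pmf (step adj a pW s). pmf (step adj a pW s) t * \<psi> t)"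

lemma pedge_nonneg: "pedge adj pW i j \<ge> 0"
  unfolding pedge_def using pW_nonneg by (auto intro: sum_nonneg)
lemma pedge_sym: "pedge adj pW i j = pedge adj pW j i"
  unfolding pedge_def using adj_sym by (auto intro!: sum.cong)
lemma cc_nonneg: "cc i j \<ge> 0" unfolding cc_def using a_nonneg pedge_nonneg by simp
lemma cc_sym: "cc i j = cc j i" unfolding cc_def using a_sym pedge_sym by simp
lemma CC_nonneg: "CC \<ge> 0" unfolding CC_def using cc_nonneg by (simp add: sum_nonneg)
lemma cc_le_CC: "cc i j \<le> CC"
proof -
  have "cc i j \<le> (\<Sum>j\<in>UNIV. cc i j)" using cc_nonneg by (intro member_le_sum) auto
  also have "\<dots> \<le> CC" unfolding CC_def using cc_nonneg by (intro member_le_sum sum_nonneg) auto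
  finally show ?thesis .
qed

lemma Inv_v0: "Inv v0"
proof -
  have "\<not> adj i j \<Longrightarrow> v0 i j = 0" for i j using v0_pos[of i j] v0_nonneg[of i j] by linarith
  then show ?thesis unfolding Inv_def using v0_sym by auto
qed

lemma Inv_nonneg: "Inv s \<Longrightarrow> s i j \<ge> 0"
  unfolding Inv_def using v0_nonneg by (meson order.trans)
lemma Inv_pos: "Inv s \<Longrightarrow> s i j > 0 \<longleftrightarrow> adj i j"
  unfolding Inv_def using v0_pos by (metis order.strict_trans2 order_less_irrefl)
lemma Inv_le_vsum: "Inv s \<Longrightarrow> s i j \<le> vsum s i"
  unfolding vsum_def using Inv_nonneg by (intro member_le_sum) auto
lemma Inv_vsum_nonneg: "Inv s \<Longrightarrow> vsum s i \<ge> 0"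
  unfolding vsum_def using Inv_nonneg by (intro sum_nonneg) auto
lemma Inv_vsum_pos: "Inv s \<Longrightarrow> adj i j \<Longrightarrow> vsum s i > 0"
  using Inv_le_vsum Inv_pos by (meson order.strict_trans2)

lemma FF_Tr: "Tr s (FF adj a s c W)"
  unfolding Tr_def FF_def by auto

lemma FF_Inv: "Inv s \<Longrightarrow> Inv (FF adj a s c W)"
  unfolding Inv_def FF_def using adj_sym a_sym a_nonneg
  by (auto simp: add_increasing2)

lemma step_Tr: "t \<in> set_pmf (step adj a pW s) \<Longrightarrow> Tr s t"
  using set_step FF_Tr by fastforce
lemma step_Inv: "t \<in> set_pmf (step adj a pW s) \<Longrightarrow> Inv s \<Longrightarrow> Inv t"
  using set_step FF_Inv by fastforce

end

context rls begin

definition AA where "AA = (\<Sum>i\<in>UNIV. \<Sum>j\<in>UNIV. a i j)"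
lemma a_le_AA: "a i j \<le> AA"
proof -
  have "a i j \<le> (\<Sum>j\<in>UNIV. a i j)" using a_nonneg by (intro member_le_sum) auto
  also have "\<dots> \<le> AA" unfolding AA_def using a_nonneg by (intro member_le_sum sum_nonneg) auto
  finally show ?thesis .
qed

lemma Tr_ge: "Tr s t \<Longrightarrow> s i j \<le> t i j"
  unfolding Tr_def using a_nonneg by (metis add_increasing2 order_refl)

lemma dl_zero: "(\<And>j. t i j = s i j) \<Longrightarrow> dl s t i = 0"
  unfolding dl_def vsum_def by simp

lemma dl_one:
  assumes "Tr s t" "t i j \<noteq> s i j"
  shows "dl s t i = a i j" "t i j = s i j + a i j" "adj i j"
proof -
  have h: "adj i j \<and> t i j = s i j + a i j \<and> (\<forall>k. k \<noteq> j \<longrightarrow> t i k = s i k)"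
    using assms unfolding Tr_def by metis
  then show "t i j = s i j + a i j" "adj i j" by auto
  have "dl s t i = (\<Sum>k\<in>UNIV. t i k - s i k)" unfolding dl_def vsum_def by (simp add: sum_subtractf)
  also have "\<dots> = (\<Sum>k\<in>UNIV. if k = j then a i j else 0)"
    using h by (intro sum.cong) auto
  also have "\<dots> = a i j" by simp
  finally show "dl s t i = a i j" .
qed

lemma dl_bounds:
  assumes "Tr s t" shows "0 \<le> dl s t i" "dl s t i \<le> AA"
proof -
  have "0 \<le> dl s t i \<and> dl s t i \<le> AA"
  proof (cases "\<forall>j. t i j = s i j")
    case True then show ?thesis using dl_zero[of t i s] AA_def a_nonneg
      by (simp add: sum_nonneg)
  next
    case False
    then obtain j where "t i j \<noteq> s i j" by auto
    then show ?thesis using dl_one[OF assms] a_nonneg a_le_AA by metis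
  qed
  then show "0 \<le> dl s t i" "dl s t i \<le> AA" by auto
qed

lemma dl_other:
  assumes "Inv s" "Inv t" "Tr s t" "t i j \<noteq> s i j"
  shows "dl s t j = t i j - s i j"
proof -
  have "t j i \<noteq> s j i" using assms unfolding Inv_def by metis
  then have "dl s t j = a j i" using dl_one[OF assms(3)] by metis
  then show ?thesis using dl_one[OF assms(3,4)] a_sym by simp
qed

lemma total_pos: "Inv s \<Longrightarrow> total s > 0"
proof -
  assume s: "Inv s"
  obtain i j where "a i j * pedge adj pW i j > 0" using nondeg by auto
  then have "a i j > 0" using pedge_nonneg[of i j] a_nonneg[of i j]
    by (metis less_eq_real_def mult_zero_left)
  then have "s i j > 0" using a_adj Inv_pos[OF s] by auto
  also have "s i j \<le> vsum s i" by (rule Inv_le_vsum[OF s])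
  also have "vsum s i \<le> total s" unfolding total_def vsum_def using Inv_vsum_nonneg[OF s]
    by (intro member_le_sum) (auto simp: vsum_def)
  finally show ?thesis .
qed

lemma payoff_eq: assumes s: "Inv s" shows "payoff adj a pW (normalise s) = ff s"
proof -
  have T: "total s > 0" by (rule total_pos[OF s])
  have vs: "vsum (normalise s) i = vsum s i / total s" for i
    unfolding vsum_def normalise_def by (simp add: sum_divide_distrib)
  have "payoff adj a pW (normalise s) = (\<Sum>(i,j)\<in>{(i,j). normalise s i j > 0}. cc i j * ((s i j)^2 / (vsum s i * vsum s j)))"
    unfolding payoff_def vs using T by (intro sum.cong) (auto simp: normalise_def cc_def field_simps power2_eq_square)
  also have "\<dots> = (\<Sum>(i,j)\<in>UNIV. cc i j * ((s i j)^2 / (vsum s i * vsum s j)))"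
  proof (rule sum.mono_neutral_left)
    show "\<forall>x\<in>UNIV - {(i, j). 0 < normalise s i j}. (case x of (i,j) \<Rightarrow> cc i j * ((s i j)^2 / (vsum s i * vsum s j))) = 0"
    proof
      fix x assume "x \<in> UNIV - {(i, j). 0 < normalise s i j}"
      then obtain i j where x: "x = (i,j)" "\<not> 0 < s i j / total s" by (auto simp: normalise_def)
      then have "s i j = 0" using T Inv_nonneg[OF s, of i j] by (simp add: field_simps)
      then show "(case x of (i,j) \<Rightarrow> cc i j * ((s i j)^2 / (vsum s i * vsum s j))) = 0" using x by simp
    qed
  qed auto
  also have "\<dots> = ff s" unfolding ff_def UNIV_Times_UNIV[symmetric] sum.cartesian_product by simp
  finally show ?thesis .
qed

definition gg where "gg s i j = (s i j)^2 / (vsum s i * vsum s j)"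

lemma gg_bounds: assumes "Inv s" shows "0 \<le> gg s i j" "gg s i j \<le> 1"
proof -
  show "0 \<le> gg s i j" unfolding gg_def using Inv_vsum_nonneg[OF assms] by simp
  have "s i j * s i j \<le> vsum s i * vsum s j"
    using Inv_le_vsum[OF assms, of i j] Inv_le_vsum[OF assms, of j i] Inv_nonneg[OF assms, of i j] assms
    unfolding Inv_def by (intro mult_mono) auto
  moreover have "0 \<le> vsum s i * vsum s j" using Inv_vsum_nonneg[OF assms] by simp
  ultimately show "gg s i j \<le> 1" unfolding gg_def
    by (cases "vsum s i * vsum s j = 0") (auto simp: power2_eq_square divide_le_eq_1 less_eq_real_def)
qed

lemma ff_bounds: assumes "Inv s" shows "0 \<le> ff s" "ff s \<le> CC"
proof -
  have e: "ff s = (\<Sum>i\<in>UNIV. \<Sum>j\<in>UNIV. cc i j * gg s i j)" unfolding ff_def gg_def by simp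
  show "0 \<le> ff s" unfolding e using gg_bounds[OF assms] cc_nonneg by (intro sum_nonneg mult_nonneg_nonneg) auto
  show "ff s \<le> CC" unfolding e CC_def using gg_bounds[OF assms] cc_nonneg
    by (intro sum_mono) (simp add: mult_left_le)
qed

definition uu where "uu s t i = dl s t i / vsum s i"

lemma uu_nonneg: "Inv s \<Longrightarrow> Tr s t \<Longrightarrow> uu s t i \<ge> 0"
  unfolding uu_def using dl_bounds Inv_vsum_nonneg by simp

lemma uu_le_XX: "uu s t i ^2 \<le> XX s t"
  unfolding XX_def uu_def by (intro member_le_sum) auto

lemma term_bounds:
  assumes s: "Inv s" and t: "Inv t" and tr: "Tr s t"
  shows "\<bar>gg t i j - gg s i j\<bar> \<le> 3*(uu s t i + uu s t j)"
    and "gg t i j - gg s i j - gg s i j * (2*(t i j - s i j)/s i j - uu s t i - uu s t j) \<ge> -6*(uu s t i^2 + uu s t j^2)"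
proof -
  have "\<bar>gg t i j - gg s i j\<bar> \<le> 3*(uu s t i + uu s t j) \<and>
     gg t i j - gg s i j - gg s i j * (2*(t i j - s i j)/s i j - uu s t i - uu s t j) \<ge> -6*(uu s t i^2 + uu s t j^2)"
  proof (cases "adj i j")
    case False
    then have "s i j = 0" "t i j = 0" using s t unfolding Inv_def by auto
    then show ?thesis using uu_nonneg[OF s tr] by (simp add: gg_def)
  next
    case True
    define x where "x = s i j" define y where "y = vsum s i" define z where "z = vsum s j"
    define e where "e = t i j - s i j"
    have x: "0 < x" "x \<le> y" "x \<le> z" unfolding x_def y_def z_def
      using True Inv_pos[OF s] Inv_le_vsum[OF s] s unfolding Inv_def by (auto, metis)
    have d: "dl s t i \<ge> 0" "dl s t j \<ge> 0" using dl_bounds[OF tr] by auto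
    have ee: "e = 0 \<or> (e = dl s t i \<and> e = dl s t j)"
      using dl_one[OF tr, of i j] dl_other[OF s t tr, of i j] unfolding e_def by auto
    have vt: "vsum t i = y + dl s t i" "vsum t j = z + dl s t j" unfolding dl_def y_def z_def by auto
    have tij: "t i j = x + e" unfolding x_def e_def by simp
    have gt: "gg t i j = (x+e)^2/((y + dl s t i)*(z + dl s t j))" unfolding gg_def vt tij ..
    have gs: "gg s i j = x^2/(y*z)" unfolding gg_def x_def y_def z_def ..
    have uu: "uu s t i = dl s t i / y" "uu s t j = dl s t j / z" unfolding uu_def y_def z_def by auto
    show ?thesis unfolding gt gs uu using pair_bounds[OF x d ee] by (simp add: x_def e_def)
  qed
  then show "\<bar>gg t i j - gg s i j\<bar> \<le> 3*(uu s t i + uu s t j)"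
    and "gg t i j - gg s i j - gg s i j * (2*(t i j - s i j)/s i j - uu s t i - uu s t j) \<ge> -6*(uu s t i^2 + uu s t j^2)"
    by auto
qed

end

context rls begin

lemma ff_gg: "ff s = (\<Sum>i\<in>UNIV. \<Sum>j\<in>UNIV. cc i j * gg s i j)" unfolding ff_def gg_def by simp

lemma ff_diff:
  assumes s: "Inv s" and t: "Inv t" and tr: "Tr s t"
  shows "(ff t - ff s)^2 \<le> 36 * CC^2 * XX s t"
proof -
  have X0: "XX s t \<ge> 0" unfolding XX_def by (simp add: sum_nonneg)
  have us: "uu s t i \<le> sqrt (XX s t)" for i using uu_le_XX by (intro real_le_rsqrt) auto
  have "\<bar>ff t - ff s\<bar> = \<bar>\<Sum>i\<in>UNIV. \<Sum>j\<in>UNIV. cc i j * (gg t i j - gg s i j)\<bar>"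
    unfolding ff_gg by (simp only: sum_subtractf[symmetric] right_diff_distrib)
  also have "\<dots> \<le> (\<Sum>i\<in>UNIV. \<Sum>j\<in>UNIV. \<bar>cc i j * (gg t i j - gg s i j)\<bar>)"
    by (rule order.trans[OF sum_abs sum_mono]) (rule sum_abs)
  also have "\<dots> \<le> (\<Sum>i\<in>UNIV. \<Sum>j\<in>UNIV. cc i j * (6 * sqrt (XX s t)))"
  proof (intro sum_mono)
    fix i j
    have "\<bar>gg t i j - gg s i j\<bar> \<le> 6 * sqrt (XX s t)"
      using term_bounds(1)[OF s t tr, of i j] us[of i] us[of j] by argo
    then show "\<bar>cc i j * (gg t i j - gg s i j)\<bar> \<le> cc i j * (6 * sqrt (XX s t))"
      using cc_nonneg[of i j] by (simp add: abs_mult mult_left_mono)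
  qed
  also have "\<dots> = CC * (6 * sqrt (XX s t))" unfolding CC_def by (simp add: sum_distrib_right)
  finally have h: "\<bar>ff t - ff s\<bar> \<le> 6 * CC * sqrt (XX s t)" by simp
  have "(ff t - ff s)^2 = \<bar>ff t - ff s\<bar>^2" by simp
  also have "\<dots> \<le> (6 * CC * sqrt (XX s t))^2" using h by (intro power_mono) auto
  also have "\<dots> = 36 * CC^2 * XX s t" using X0 by (simp add: power_mult_distrib)
  finally show ?thesis .
qed

lemma Lin_gg: "Lin s t = (\<Sum>i\<in>UNIV. \<Sum>j\<in>UNIV. cc i j * gg s i j * (2*(t i j - s i j)/s i j - uu s t i - uu s t j))"
  unfolding Lin_def gg_def uu_def ..

lemma ff_lin:
  assumes s: "Inv s" and t: "Inv t" and tr: "Tr s t"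
  shows "ff t - ff s - Lin s t \<ge> -12 * CC * XX s t"
proof -
  have "ff t - ff s - Lin s t = (\<Sum>i\<in>UNIV. \<Sum>j\<in>UNIV. cc i j * (gg t i j - gg s i j - gg s i j * (2*(t i j - s i j)/s i j - uu s t i - uu s t j)))"
    unfolding ff_gg Lin_gg by (simp only: sum_subtractf[symmetric] right_diff_distrib mult.assoc)
  also have "\<dots> \<ge> (\<Sum>i\<in>UNIV. \<Sum>j\<in>UNIV. cc i j * (-12 * XX s t))"
  proof (intro sum_mono)
    fix i j
    have "-12 * XX s t \<le> -6*(uu s t i^2 + uu s t j^2)" using uu_le_XX[of s t i] uu_le_XX[of s t j] by argo
    also have "\<dots> \<le> gg t i j - gg s i j - gg s i j * (2*(t i j - s i j)/s i j - uu s t i - uu s t j)"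
      by (rule term_bounds(2)[OF s t tr])
    finally show "cc i j * (-12 * XX s t) \<le> cc i j * (gg t i j - gg s i j - gg s i j * (2*(t i j - s i j)/s i j - uu s t i - uu s t j))"
      using cc_nonneg by (intro mult_left_mono) auto
  qed
  also have "(\<Sum>i\<in>UNIV. \<Sum>j\<in>UNIV. cc i j * (-12 * XX s t)) = -12 * CC * XX s t"
    unfolding CC_def sum_distrib_right[symmetric] by (simp only: mult_ac)
  finally show ?thesis .
qed

end


lemma cs_lemma:
  fixes s m :: "'a \<Rightarrow> real"
  assumes fin: "finite A" and s: "\<And>j. j \<in> A \<Longrightarrow> s j \<ge> 0" and m: "\<And>j. j \<in> A \<Longrightarrow> s j = 0 \<Longrightarrow> m j = 0"
  shows "(\<Sum>j\<in>A. m j)^2 / (\<Sum>j\<in>A. s j) \<le> (\<Sum>j\<in>A. (m j)^2 / s j)"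
proof -
  define V where "V = (\<Sum>j\<in>A. s j)"
  define S where "S = (\<Sum>j\<in>A. m j)"
  have V0: "V \<ge> 0" unfolding V_def using s by (simp add: sum_nonneg)
  show ?thesis
  proof (cases "V = 0")
    case True
    then show ?thesis using s unfolding V_def[symmetric] by (auto intro!: sum_nonneg)
  next
    case False
    then have Vp: "V > 0" using V0 by simp
    define l where "l = S / V"
    have "0 \<le> (\<Sum>j\<in>A. (m j - l * s j)^2 / s j)" using s by (intro sum_nonneg) auto
    also have "\<dots> = (\<Sum>j\<in>A. (m j)^2 / s j - 2 * l * m j + l^2 * s j)"
    proof (intro sum.cong refl)
      fix j assume j: "j \<in> A"
      show "(m j - l * s j)^2 / s j = (m j)^2 / s j - 2 * l * m j + l^2 * s j"
      proof (cases "s j = 0")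
        case True then show ?thesis using m[OF j] by simp
      next
        case False then show ?thesis by (simp add: field_simps power2_eq_square)
      qed
    qed
    also have "\<dots> = (\<Sum>j\<in>A. (m j)^2 / s j) - 2 * l * S + l^2 * V"
      unfolding S_def V_def by (simp add: sum.distrib sum_subtractf sum_distrib_left)
    also have "\<dots> = (\<Sum>j\<in>A. (m j)^2 / s j) - S^2 / V"
      using Vp unfolding l_def by (simp add: field_simps power2_eq_square)
    finally show ?thesis unfolding S_def V_def by simp
  qed
qed

context rls begin

lemma EE_const: "EE s (\<lambda>_. k) = k"
  unfolding EE_def by (simp add: sum_distrib_right[symmetric] sum_pmf_eq_1 finite_set_step)
lemma EE_sum: "finite A \<Longrightarrow> EE s (\<lambda>t. \<Sum>i\<in>A. f i t) = (\<Sum>i\<in>A. EE s (f i))"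
  unfolding EE_def by (simp add: sum_distrib_left) (rule sum.swap)
lemma EE_diff: "EE s (\<lambda>t. f t - g t) = EE s f - EE s g"
  unfolding EE_def by (simp add: right_diff_distrib sum_subtractf)
lemma EE_cmult: "EE s (\<lambda>t. k * f t) = k * EE s f"
  unfolding EE_def by (simp add: sum_distrib_left mult_ac)
lemma EE_mono: "(\<And>t. t \<in> set_pmf (step adj a pW s) \<Longrightarrow> f t \<le> g t) \<Longrightarrow> EE s f \<le> EE s g"
  unfolding EE_def by (intro sum_mono mult_left_mono) auto
lemma EE_cong: "(\<And>t. t \<in> set_pmf (step adj a pW s) \<Longrightarrow> f t = g t) \<Longrightarrow> EE s f = EE s g"
  unfolding EE_def by (intro sum.cong) auto

definition mm where "mm s i j = cc i j * gg s i j"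

lemma EE_entry: assumes s: "Inv s" shows "EE s (\<lambda>t. t i j) = s i j + mm s i j"
proof (cases "adj i j")
  case True
  have "EE s (\<lambda>t. t i j) = s i j + a i j * pedge adj pW i j * ((s i j / vsum s i) * (s j i / vsum s j))"
  proof -
    have ji: "adj j i" "i \<noteq> j" using True adj_sym adj_irrefl by metis+
    show ?thesis unfolding EE_def step_sum
      by (rule expect_entry[where s=s and adj=adj and pW=pW and a=a])
        (use pW_nonneg pW_sum Inv_nonneg[OF s] Inv_vsum_pos[OF s True] Inv_vsum_pos[OF s ji(1)] True ji(2) in auto)
  qed
  also have "s j i = s i j" using s unfolding Inv_def by metis
  finally show ?thesis unfolding mm_def cc_def gg_def by (simp add: power2_eq_square)
next
  case False
  have "EE s (\<lambda>t. t i j) = EE s (\<lambda>_. s i j)"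
    using step_Tr False unfolding Tr_def by (intro EE_cong) metis
  moreover have "s i j = 0" using s False unfolding Inv_def by auto
  ultimately show ?thesis by (simp add: EE_const mm_def gg_def)
qed

lemma EE_inc: "Inv s \<Longrightarrow> EE s (\<lambda>t. t i j - s i j) = mm s i j"
  by (simp add: EE_diff EE_const EE_entry)

lemma EE_dl: assumes "Inv s" shows "EE s (\<lambda>t. dl s t i) = (\<Sum>j\<in>UNIV. mm s i j)"
proof -
  have "EE s (\<lambda>t. dl s t i) = EE s (\<lambda>t. \<Sum>j\<in>UNIV. t i j - s i j)"
    unfolding dl_def vsum_def by (simp add: sum_subtractf)
  also have "\<dots> = (\<Sum>j\<in>UNIV. mm s i j)" by (simp add: EE_sum EE_inc[OF assms])
  finally show ?thesis .
qed

lemma mm_sym: "Inv s \<Longrightarrow> mm s i j = mm s j i"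
  unfolding mm_def gg_def Inv_def using cc_sym by (simp add: mult.commute)

lemma mm_zero: "s i j = 0 \<Longrightarrow> mm s i j = 0" unfolding mm_def gg_def by simp

lemma drift_nonneg: assumes s: "Inv s" shows "EE s (Lin s) \<ge> 0"
proof -
  define v where "v i = vsum s i" for i
  define Sm where "Sm i = (\<Sum>j\<in>UNIV. mm s i j)" for i
  define al where "al i j = 2 * mm s i j / s i j" for i j
  define be where "be i j = mm s i j / v i" for i j
  define ga where "ga i j = mm s i j / v j" for i j
  have L: "Lin s t = (\<Sum>i\<in>UNIV. \<Sum>j\<in>UNIV. al i j * (t i j - s i j)
            - be i j * dl s t i - ga i j * dl s t j)" for t
    unfolding Lin_gg mm_def uu_def v_def al_def be_def ga_def v_def by (intro sum.cong refl) (simp add: algebra_simps)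
  have "EE s (Lin s) = (\<Sum>i\<in>UNIV. \<Sum>j\<in>UNIV. al i j * mm s i j
            - be i j * Sm i - ga i j * Sm j)"
    unfolding L by (simp only: EE_sum finite EE_diff EE_cmult EE_const EE_entry[OF s] add_diff_cancel_left' EE_dl[OF s] Sm_def)
  also have "\<dots> = (\<Sum>i\<in>UNIV. \<Sum>j\<in>UNIV. (2 * mm s i j / s i j) * mm s i j
            - (mm s i j / v i) * Sm i - (mm s i j / v j) * Sm j)"
    unfolding al_def be_def ga_def ..
  also have "\<dots> = (\<Sum>i\<in>UNIV. \<Sum>j\<in>UNIV. (2 * mm s i j / s i j) * mm s i j)
       - (\<Sum>i\<in>UNIV. \<Sum>j\<in>UNIV. (mm s i j / v i) * Sm i) - (\<Sum>i\<in>UNIV. \<Sum>j\<in>UNIV. (mm s i j / v j) * Sm j)"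
    by (simp only: sum_subtractf)
  also have "(\<Sum>i\<in>UNIV. \<Sum>j\<in>UNIV. (mm s i j / v i) * Sm i) = (\<Sum>i\<in>UNIV. (Sm i)^2 / v i)"
  proof (intro sum.cong refl)
    fix i
    have "(\<Sum>j\<in>UNIV. (mm s i j / v i) * Sm i) = (\<Sum>j\<in>UNIV. mm s i j * (Sm i / v i))"
      by (intro sum.cong refl) simp
    also have "\<dots> = (\<Sum>j\<in>UNIV. mm s i j) * (Sm i / v i)"
      by (rule sum_distrib_right[symmetric])
    finally have "(\<Sum>j\<in>UNIV. (mm s i j / v i) * Sm i) = (\<Sum>j\<in>UNIV. mm s i j) * (Sm i / v i)" .
    then show "(\<Sum>j\<in>UNIV. (mm s i j / v i) * Sm i) = (Sm i)^2 / v i"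
      unfolding Sm_def[symmetric] by (simp add: power2_eq_square)
  qed
  also have "(\<Sum>i\<in>UNIV. \<Sum>j\<in>UNIV. (mm s i j / v j) * Sm j) = (\<Sum>j\<in>UNIV. \<Sum>i\<in>UNIV. (mm s i j / v j) * Sm j)"
    by (rule sum.swap)
  also have "\<dots> = (\<Sum>j\<in>UNIV. (Sm j)^2 / v j)"
  proof (intro sum.cong refl)
    fix j
    have "(\<Sum>i\<in>UNIV. (mm s i j / v j) * Sm j) = (\<Sum>i\<in>UNIV. mm s j i * (Sm j / v j))"
      using mm_sym[OF s] by (intro sum.cong refl) simp
    also have "\<dots> = (\<Sum>i\<in>UNIV. mm s j i) * (Sm j / v j)"
      by (rule sum_distrib_right[symmetric])
    finally have "(\<Sum>i\<in>UNIV. (mm s i j / v j) * Sm j) = (\<Sum>i\<in>UNIV. mm s j i) * (Sm j / v j)" .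
    then show "(\<Sum>i\<in>UNIV. (mm s i j / v j) * Sm j) = (Sm j)^2 / v j"
      unfolding Sm_def[symmetric] by (simp add: power2_eq_square)
  qed
  also have "(\<Sum>i\<in>UNIV. \<Sum>j\<in>UNIV. (2 * mm s i j / s i j) * mm s i j) = (\<Sum>i\<in>UNIV. 2 * (\<Sum>j\<in>UNIV. (mm s i j)^2 / s i j))"
    by (simp add: sum_distrib_left power2_eq_square mult.assoc)
  finally have E: "EE s (Lin s) = 2 * (\<Sum>i\<in>UNIV. (\<Sum>j\<in>UNIV. (mm s i j)^2 / s i j) - (Sm i)^2 / v i)"
    by (simp add: sum_subtractf sum_distrib_left sum_negf)
  have "(Sm i)^2 / v i \<le> (\<Sum>j\<in>UNIV. (mm s i j)^2 / s i j)" for i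
    unfolding Sm_def v_def vsum_def
    by (rule cs_lemma) (auto simp: Inv_nonneg[OF s] mm_zero)
  then show ?thesis unfolding E by (simp add: sum_nonneg)
qed

end


lemma tele_step:
  fixes y d A m :: real
  assumes "m > 0" "y \<ge> m" "0 \<le> d" "d \<le> A"
  shows "(d / y)^2 \<le> (A + A^2/m) * (1/y - 1/(y+d))"
proof -
  have y: "y > 0" using assms by simp
  have e: "1/y - 1/(y+d) = d/(y*(y+d))" using y assms by (simp add: field_simps)
  have "d*(y+d) \<le> (A + A^2/m) * y"
  proof -
    have "d*y \<le> A*y" using assms y by (intro mult_right_mono) auto
    moreover have "d*d \<le> A*A" using assms by (intro mult_mono) auto
    moreover have "A*A \<le> A^2/m * y"
    proof -
      have "A^2 * 1 \<le> A^2 * (y/m)" using assms by (intro mult_left_mono) (auto simp: field_simps)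
      then show ?thesis by (simp add: power2_eq_square)
    qed
    ultimately show ?thesis by (simp add: algebra_simps)
  qed
  then have "d*(y+d) * (d/(y*y*(y+d))) \<le> (A + A^2/m) * y * (d/(y*y*(y+d)))"
    using assms y by (intro mult_right_mono) auto
  moreover have "d*(y+d) * (d/(y*y*(y+d))) = (d/y)^2"
  proof -
    have "y + d \<noteq> 0" "y \<noteq> 0" using y assms by auto
    then show ?thesis by (simp add: power2_eq_square)
  qed
  moreover have "\<And>K. K * y * (d/(y*y*(y+d))) = K * (d/(y*(y+d)))"
  proof -
    fix K
    have "y + d \<noteq> 0" "y \<noteq> 0" using y assms by auto
    then show "K * y * (d/(y*y*(y+d))) = K * (d/(y*(y+d)))" by simp
  qed
  ultimately have "(d/y)^2 \<le> (A + A^2/m) * (d/(y*(y+d)))" by simp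
  then show ?thesis unfolding e .
qed

lemma tele:
  fixes y :: "nat \<Rightarrow> real"
  assumes m: "m > 0" "y 0 \<ge> m" and inc: "\<And>k. k < n \<Longrightarrow> y k \<le> y (Suc k) \<and> y (Suc k) - y k \<le> A"
  shows "(\<Sum>k<n. ((y (Suc k) - y k) / y k)^2) \<le> (A + A^2/m) * (1 / y 0 - 1 / y n) \<and> y n \<ge> m"
  using inc
proof (induction n)
  case 0 then show ?case using m by simp
next
  case (Suc n)
  then have IH: "(\<Sum>k<n. ((y (Suc k) - y k) / y k)^2) \<le> (A + A^2/m) * (1 / y 0 - 1 / y n)" "y n \<ge> m" by auto
  have st: "y n \<le> y (Suc n)" "y (Suc n) - y n \<le> A" using Suc.prems by auto
  have "((y (Suc n) - y n) / y n)^2 \<le> (A + A^2/m) * (1/y n - 1/(y n + (y (Suc n) - y n)))"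
    by (rule tele_step) (use m IH st in auto)
  then have "((y (Suc n) - y n) / y n)^2 \<le> (A + A^2/m) * (1/y n - 1/y (Suc n))" by simp
  then show ?case using IH st by (simp add: algebra_simps)
qed

context rls begin

definition DD where "DD s = EE s (\<lambda>t. ff t - ff s)"

lemma drift_low: assumes s: "Inv s" shows "DD s \<ge> -12 * CC * EE s (XX s)"
proof -
  have "EE s (\<lambda>t. Lin s t - 12 * CC * XX s t) \<le> DD s"
    unfolding DD_def
  proof (intro EE_mono)
    fix t assume t: "t \<in> set_pmf (step adj a pW s)"
    from ff_lin[OF s step_Inv[OF t s] step_Tr[OF t]] show "Lin s t - 12 * CC * XX s t \<le> ff t - ff s" by linarith
  qed
  moreover have "EE s (\<lambda>t. Lin s t - 12 * CC * XX s t) = EE s (Lin s) - 12 * CC * EE s (XX s)"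
    by (simp add: EE_diff EE_cmult mult.assoc)
  ultimately show ?thesis using drift_nonneg[OF s] by linarith
qed

lemma var_bound: assumes s: "Inv s"
  shows "EE s (\<lambda>t. (ff t - ff s - DD s)^2) \<le> 36 * CC^2 * EE s (XX s)"
proof -
  define z where "z t = ff t - ff s" for t
  have Dz: "DD s = EE s z" unfolding DD_def z_def ..
  have "EE s (\<lambda>t. (ff t - ff s - DD s)^2) = EE s (\<lambda>t. ((z t)^2 - (2 * DD s) * z t) + (DD s)^2)"
    by (intro EE_cong) (simp add: z_def power2_eq_square algebra_simps)
  also have "\<dots> = EE s (\<lambda>t. (z t)^2 - (2 * DD s) * z t) + EE s (\<lambda>t. (DD s)^2)"
    unfolding EE_def by (simp add: distrib_left sum.distrib)
  also have "\<dots> = EE s (\<lambda>t. (ff t - ff s)^2) - (DD s)^2"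
    unfolding EE_diff EE_cmult EE_const Dz[symmetric] by (simp add: z_def power2_eq_square)
  also have "\<dots> \<le> EE s (\<lambda>t. (ff t - ff s)^2)" by simp
  also have "\<dots> \<le> EE s (\<lambda>t. 36 * CC^2 * XX s t)"
    using ff_diff[OF s step_Inv[OF _ s] step_Tr] by (intro EE_mono) auto
  also have "\<dots> = 36 * CC^2 * EE s (XX s)" by (simp add: EE_cmult)
  finally show ?thesis .
qed

lemma XX_nonneg: "XX s t \<ge> 0" unfolding XX_def by (simp add: sum_nonneg)

definition KX where "KX = (\<Sum>i\<in>UNIV. if vsum v0 i > 0 then (AA + AA^2 / vsum v0 i) / vsum v0 i else 0)"

lemma Inv_vsum_ge: "Inv s \<Longrightarrow> vsum v0 i \<le> vsum s i"
  unfolding vsum_def by (intro sum_mono) (meson Inv_def)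

lemma path_X:
  assumes r0: "\<rho> 0 = v0" and r: "\<And>k. k < n \<Longrightarrow> Inv (\<rho> k) \<and> Tr (\<rho> k) (\<rho> (Suc k))"
  shows "(\<Sum>k<n. XX (\<rho> k) (\<rho> (Suc k))) \<le> KX"
proof -
  have "(\<Sum>k<n. XX (\<rho> k) (\<rho> (Suc k))) = (\<Sum>i\<in>UNIV. \<Sum>k<n. ((vsum (\<rho> (Suc k)) i - vsum (\<rho> k) i) / vsum (\<rho> k) i)^2)"
    unfolding XX_def dl_def by (rule sum.swap)
  also have "\<dots> \<le> KX" unfolding KX_def
  proof (intro sum_mono)
    fix i
    show "(\<Sum>k<n. ((vsum (\<rho> (Suc k)) i - vsum (\<rho> k) i) / vsum (\<rho> k) i)^2)
        \<le> (if vsum v0 i > 0 then (AA + AA^2 / vsum v0 i) / vsum v0 i else 0)"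
    proof (cases "vsum v0 i > 0")
      case True
      define m where "m = vsum v0 i"
      have inc: "vsum (\<rho> k) i \<le> vsum (\<rho> (Suc k)) i \<and> vsum (\<rho> (Suc k)) i - vsum (\<rho> k) i \<le> AA" if "k < n" for k
        using dl_bounds[of "\<rho> k" "\<rho> (Suc k)" i] r[OF that] unfolding dl_def by auto
      have T: "(\<Sum>k<n. ((vsum (\<rho> (Suc k)) i - vsum (\<rho> k) i) / vsum (\<rho> k) i)^2) \<le> (AA + AA^2/m) * (1 / vsum (\<rho> 0) i - 1 / vsum (\<rho> n) i) \<and> vsum (\<rho> n) i \<ge> m"
        by (rule tele[where y="\<lambda>k. vsum (\<rho> k) i"]) (use True inc r0 in \<open>auto simp: m_def\<close>)
      have AA0: "AA \<ge> 0" unfolding AA_def using a_nonneg by (simp add: sum_nonneg)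
      have "(AA + AA^2/m) * (1 / vsum (\<rho> 0) i - 1 / vsum (\<rho> n) i) \<le> (AA + AA^2/m) * (1/m)"
        using T True AA0 r0 unfolding m_def[symmetric] by (intro mult_left_mono) (auto simp: m_def)
      then show ?thesis using T True by (simp add: m_def)
    next
      case False
      have "\<not> adj i j" for j
      proof
        assume "adj i j"
        then have "v0 i j > 0" using v0_pos by auto
        also have "v0 i j \<le> vsum v0 i" unfolding vsum_def using v0_nonneg by (intro member_le_sum) auto
        finally show False using False by simp
      qed
      moreover have "\<forall>i j. \<not> adj i j \<longrightarrow> \<rho> k i j = 0" if "k < n" for k
        using r[OF that] unfolding Inv_def by blast
      ultimately have "vsum (\<rho> k) i = 0" if "k < n" for k
        using that unfolding vsum_def by simp
      then show ?thesis using False by simp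
    qed
  qed
  finally show ?thesis .
qed

end


locale proc = rls adj a pW v0 for adj :: "'v::finite \<Rightarrow> 'v \<Rightarrow> bool" and a pW v0 +
  fixes M :: "'w measure"
    and V :: "nat \<Rightarrow> 'w \<Rightarrow> ('v \<Rightarrow> 'v \<Rightarrow> real)"
  assumes M: "prob_space M"
    and V_meas: "\<And>n s. {\<omega> \<in> space M. V n \<omega> = s} \<in> sets M"
    and V_init: "measure M {\<omega> \<in> space M. V 0 \<omega> = v0} = 1"
    and V_markov: "\<And>n (s :: nat \<Rightarrow> ('v \<Rightarrow> 'v \<Rightarrow> real)) t.
        measure M {\<omega> \<in> space M. (\<forall>k\<le>n. V k \<omega> = s k) \<and> V (Suc n) \<omega> = t}
        = measure M {\<omega> \<in> space M. \<forall>k\<le>n. V k \<omega> = s k} * pmf (step adj a pW (s n)) t"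
begin

interpretation P: prob_space M by (rule M)

primrec Reach :: "nat \<Rightarrow> (nat \<Rightarrow> 'v \<Rightarrow> 'v \<Rightarrow> real) set" where
  "Reach 0 = {\<lambda>_. v0}"
| "Reach (Suc n) = (\<lambda>(h,t). h(Suc n := t)) ` (SIGMA h:Reach n. set_pmf (step adj a pW (h n)))"

declare Reach.simps(2)[simp del]

definition Ev where "Ev n h = {\<omega> \<in> space M. \<forall>k\<le>n. V k \<omega> = h k}"
definition Pr where "Pr n h = measure M (Ev n h)"
definition Ex where "Ex n G = (\<Sum>h\<in>Reach n. Pr n h * G h)"
definition dep :: "nat \<Rightarrow> ((nat \<Rightarrow> 'v \<Rightarrow> 'v \<Rightarrow> real) \<Rightarrow> real) \<Rightarrow> bool" where "dep n G \<longleftrightarrow> (\<forall>h h'. (\<forall>k\<le>n. h k = h' k) \<longrightarrow> G h = G h')"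

lemma finite_Reach: "finite (Reach n)"
  by (induction n) (auto simp: Reach.simps intro!: finite_SigmaI finite_set_step)

lemma Reach_props:
  assumes "h \<in> Reach n"
  shows "h 0 = v0" "\<And>k. k > n \<Longrightarrow> h k = v0" "\<And>k. k < n \<Longrightarrow> h (Suc k) \<in> set_pmf (step adj a pW (h k))"
proof -
  have "h 0 = v0 \<and> (\<forall>k>n. h k = v0) \<and> (\<forall>k<n. h (Suc k) \<in> set_pmf (step adj a pW (h k)))"
    using assms
  proof (induction n arbitrary: h)
    case 0 then show ?case by auto
  next
    case (Suc n)
    have "h \<in> (\<lambda>(h,t). h(Suc n := t)) ` (SIGMA h:Reach n. set_pmf (step adj a pW (h n)))"
      using Suc.prems by (simp only: Reach.simps)
    then obtain x where x: "x \<in> (SIGMA h:Reach n. set_pmf (step adj a pW (h n)))" "h = (\<lambda>(h,t). h(Suc n := t)) x"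
      by (rule imageE)
    obtain g t where gt: "x = (g,t)" by (cases x)
    have g: "g \<in> Reach n" "t \<in> set_pmf (step adj a pW (g n))" "h = g(Suc n := t)"
      using x unfolding gt by auto
    have IH: "g 0 = v0" "\<forall>k>n. g k = v0" "\<forall>k<n. g (Suc k) \<in> set_pmf (step adj a pW (g k))" using Suc.IH[OF g(1)] by auto
    show ?case
    proof (intro conjI allI impI)
      show "h 0 = v0" using IH g by simp
      fix k
      show "k > Suc n \<Longrightarrow> h k = v0" using IH g by simp
      assume k: "k < Suc n"
      show "h (Suc k) \<in> set_pmf (step adj a pW (h k))"
      proof (cases "k = n")
        case True then show ?thesis using g by simp
      next
        case False then have "k < n" using k by simp
        then show ?thesis using IH g by simp
      qed
    qed
  qed
  then show "h 0 = v0" "\<And>k. k > n \<Longrightarrow> h k = v0" "\<And>k. k < n \<Longrightarrow> h (Suc k) \<in> set_pmf (step adj a pW (h k))"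
    by auto
qed

lemma Reach_Inv: "h \<in> Reach n \<Longrightarrow> Inv (h k)"
proof (induction k)
  case 0 then show ?case using Reach_props(1) Inv_v0 by simp
next
  case (Suc k)
  show ?case
  proof (cases "k < n")
    case True then show ?thesis using Reach_props(3)[OF Suc.prems True] step_Inv Suc by blast
  next
    case False then show ?thesis using Reach_props(2)[OF Suc.prems, of "Suc k"] Inv_v0 by simp
  qed
qed

lemma Ev_sets: "Ev n h \<in> sets M"
proof (induction n)
  case 0
  have "Ev 0 h = {\<omega> \<in> space M. V 0 \<omega> = h 0}" unfolding Ev_def by auto
  then show ?case using V_meas by simp
next
  case (Suc n)
  have "Ev (Suc n) h = Ev n h \<inter> {\<omega> \<in> space M. V (Suc n) \<omega> = h (Suc n)}"
    unfolding Ev_def using le_Suc_eq by auto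
  then show ?case using Suc V_meas by auto
qed

lemma Pr_nonneg: "Pr n h \<ge> 0" unfolding Pr_def by simp

lemma Pr_step: "Pr (Suc n) (h(Suc n := t)) = Pr n h * pmf (step adj a pW (h n)) t"
proof -
  have "Ev (Suc n) (h(Suc n := t)) = {\<omega> \<in> space M. (\<forall>k\<le>n. V k \<omega> = h k) \<and> V (Suc n) \<omega> = t}"
    unfolding Ev_def using le_Suc_eq by auto
  then show ?thesis unfolding Pr_def Ev_def[of n] using V_markov by simp
qed

lemma inj_ext: "inj_on (\<lambda>(h,t). h(Suc n := t)) (SIGMA h:Reach n. set_pmf (step adj a pW (h n)))"
proof (rule inj_onI, clarsimp)
  fix h t h' t'
  assume h: "h \<in> Reach n" "h' \<in> Reach n" and e: "h(Suc n := t) = h'(Suc n := t')"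
  have "t = t'" using fun_cong[OF e, of "Suc n"] by simp
  moreover have "h = h'"
  proof
    fix k show "h k = h' k"
      using fun_cong[OF e, of k] Reach_props(2)[OF h(1), of "Suc n"] Reach_props(2)[OF h(2), of "Suc n"]
      by (cases "k = Suc n") auto
  qed
  ultimately show "h = h' \<and> t = t'" by simp
qed

lemma tower: "Ex (Suc n) G = Ex n (\<lambda>h. EE (h n) (\<lambda>t. G (h(Suc n := t))))"
proof -
  have "Ex (Suc n) G = (\<Sum>x\<in>(SIGMA h:Reach n. set_pmf (step adj a pW (h n))). Pr (Suc n) ((\<lambda>(h,t). h(Suc n := t)) x) * G ((\<lambda>(h,t). h(Suc n := t)) x))"
    unfolding Ex_def Reach.simps by (rule sum.reindex[OF inj_ext, unfolded comp_def])
  also have "\<dots> = (\<Sum>h\<in>Reach n. \<Sum>t\<in>set_pmf (step adj a pW (h n)). Pr n h * pmf (step adj a pW (h n)) t * G (h(Suc n := t)))"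
  proof -
    have "(\<Sum>h\<in>Reach n. \<Sum>t\<in>set_pmf (step adj a pW (h n)). Pr n h * pmf (step adj a pW (h n)) t * G (h(Suc n := t)))
      = (\<Sum>(h,t)\<in>(SIGMA h:Reach n. set_pmf (step adj a pW (h n))). Pr n h * pmf (step adj a pW (h n)) t * G (h(Suc n := t)))"
      by (rule sum.Sigma) (auto simp: finite_Reach finite_set_step)
    also have "\<dots> = (\<Sum>x\<in>(SIGMA h:Reach n. set_pmf (step adj a pW (h n))). Pr (Suc n) ((\<lambda>(h,t). h(Suc n := t)) x) * G ((\<lambda>(h,t). h(Suc n := t)) x))"
      by (intro sum.cong refl) (auto simp: Pr_step)
    finally show ?thesis by simp
  qed
  also have "\<dots> = Ex n (\<lambda>h. EE (h n) (\<lambda>t. G (h(Suc n := t))))"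
    unfolding Ex_def EE_def by (simp add: sum_distrib_left mult.assoc)
  finally show ?thesis .
qed

lemma Ex_one: "Ex n (\<lambda>_. 1) = 1"
proof (induction n)
  case 0
  have "Ev 0 (\<lambda>_. v0) = {\<omega> \<in> space M. V 0 \<omega> = v0}" unfolding Ev_def by auto
  then show ?case unfolding Ex_def Pr_def using V_init by simp
next
  case (Suc n) then show ?case by (simp add: tower EE_const)
qed

lemma Ex_dep: "dep n G \<Longrightarrow> Ex (Suc n) G = Ex n G"
proof -
  assume d: "dep n G"
  have "EE (h n) (\<lambda>t. G (h(Suc n := t))) = G h" for h
  proof -
    have "G (h(Suc n := t)) = G h" for t using d unfolding dep_def by auto
    then show ?thesis by (simp add: EE_const)
  qed
  then show ?thesis by (simp add: tower)
qed

lemma dep_mono: "dep n G \<Longrightarrow> n \<le> m \<Longrightarrow> dep m G"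
  unfolding dep_def
proof (intro allI impI)
  fix h h' :: "nat \<Rightarrow> 'v \<Rightarrow> 'v \<Rightarrow> real"
  assume d: "\<forall>h h'. (\<forall>k\<le>n. h k = h' k) \<longrightarrow> G h = G h'" and nm: "n \<le> m" and hh: "\<forall>k\<le>m. h k = h' k"
  have "\<forall>k\<le>n. h k = h' k" using hh nm order_trans by blast
  then show "G h = G h'" using d by blast
qed

lemma Ex_dep_le: "dep n G \<Longrightarrow> n \<le> m \<Longrightarrow> Ex m G = Ex n G"
proof (induction m)
  case 0 then show ?case by simp
next
  case (Suc m)
  show ?case
  proof (cases "n = Suc m")
    case True then show ?thesis by simp
  next
    case False
    then have nm: "n \<le> m" using Suc by simp
    have "Ex (Suc m) G = Ex m G" by (rule Ex_dep[OF dep_mono[OF Suc.prems(1) nm]])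
    also have "\<dots> = Ex n G" by (rule Suc.IH[OF Suc.prems(1) nm])
    finally show ?thesis .
  qed
qed

lemma Ex_add: "Ex n (\<lambda>h. f h + g h) = Ex n f + Ex n g"
  unfolding Ex_def by (simp add: distrib_left sum.distrib)
lemma Ex_diff: "Ex n (\<lambda>h. f h - g h) = Ex n f - Ex n g"
  unfolding Ex_def by (simp add: right_diff_distrib sum_subtractf)
lemma Ex_cmult: "Ex n (\<lambda>h. k * f h) = k * Ex n f"
  unfolding Ex_def by (simp add: sum_distrib_left mult_ac)
lemma Ex_sum: "finite A \<Longrightarrow> Ex n (\<lambda>h. \<Sum>i\<in>A. f i h) = (\<Sum>i\<in>A. Ex n (f i))"
  unfolding Ex_def by (simp add: sum_distrib_left) (rule sum.swap)
lemma Ex_mono: "(\<And>h. h \<in> Reach n \<Longrightarrow> f h \<le> g h) \<Longrightarrow> Ex n f \<le> Ex n g"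
  unfolding Ex_def using Pr_nonneg by (intro sum_mono mult_left_mono) auto
lemma Ex_cong: "(\<And>h. h \<in> Reach n \<Longrightarrow> f h = g h) \<Longrightarrow> Ex n f = Ex n g"
  unfolding Ex_def by (intro sum.cong) auto
lemma Ex_nonneg: "(\<And>h. h \<in> Reach n \<Longrightarrow> 0 \<le> f h) \<Longrightarrow> 0 \<le> Ex n f"
  using Ex_mono[of n "\<lambda>_. 0" f] by (simp add: Ex_def)

end

context proc begin

definition Y where "Y k h = ff (h (Suc k)) - ff (h k) - DD (h k)"
definition Xk where "Xk k h = XX (h k) (h (Suc k))"
definition Sm where "Sm m j h = (\<Sum>k\<in>{m..<j}. Y k h)"
definition ex where "ex n = Ex n (\<lambda>h. \<Sum>k<n. Xk k h)"
definition Q where "Q m \<epsilon> K h = (if \<exists>j\<in>{m..K}. \<epsilon> \<le> \<bar>Sm m j h\<bar> then 1 else (0::real))"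
definition Bsum where "Bsum n h = (\<Sum>k<n. EE (h k) (XX (h k)))"

lemma dep_Y: "dep (Suc k) (Y k)" unfolding dep_def Y_def by auto
lemma dep_Xk: "dep (Suc k) (Xk k)" unfolding dep_def Xk_def by auto
lemma dep_Sm: "dep j (Sm m j)" unfolding dep_def Sm_def Y_def
  by (auto intro!: sum.cong simp: Suc_le_eq)
lemma dep_Q: "dep K (Q m \<epsilon> K)" unfolding dep_def Q_def
proof (intro allI impI)
  fix h h' :: "nat \<Rightarrow> 'v \<Rightarrow> 'v \<Rightarrow> real" assume "\<forall>k\<le>K. h k = h' k"
  then have "Sm m j h = Sm m j h'" if "j \<le> K" for j using dep_Sm[of j m] that unfolding dep_def by auto
  then show "(if \<exists>j\<in>{m..K}. \<epsilon> \<le> \<bar>Sm m j h\<bar> then 1 else 0) = (if \<exists>j\<in>{m..K}. \<epsilon> \<le> \<bar>Sm m j h'\<bar> then 1 else (0::real))"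
    by auto
qed
lemma dep_mult: "dep n f \<Longrightarrow> dep n g \<Longrightarrow> dep n (\<lambda>h. f h * g h)" unfolding dep_def by metis
lemma dep_pow: "dep n f \<Longrightarrow> dep n (\<lambda>h. (f h)^2)" unfolding dep_def by metis
lemma dep_Xsum: "dep n (\<lambda>h. \<Sum>k<n. Xk k h)" unfolding dep_def Xk_def by (auto intro!: sum.cong simp: Suc_le_eq)

lemma Mart: assumes "dep k G" shows "Ex (Suc k) (\<lambda>h. G h * Y k h) = 0"
proof -
  have "EE (h k) (\<lambda>t. G (h(Suc k := t)) * Y k (h(Suc k := t))) = 0" for h
  proof -
    have "EE (h k) (\<lambda>t. G (h(Suc k := t)) * Y k (h(Suc k := t))) = EE (h k) (\<lambda>t. G h * ((ff t - ff (h k)) - DD (h k)))"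
      using assms unfolding dep_def Y_def by (intro EE_cong) auto
    also have "\<dots> = G h * (EE (h k) (\<lambda>t. ff t - ff (h k)) - EE (h k) (\<lambda>t. DD (h k)))"
      by (simp only: EE_cmult EE_diff[of _ "\<lambda>t. ff t - ff (h k)"])
    also have "\<dots> = 0" by (simp add: EE_const DD_def)
    finally show ?thesis .
  qed
  then show ?thesis by (simp only: tower) (simp add: Ex_def)
qed

lemma Mart_le: "dep k G \<Longrightarrow> Suc k \<le> n \<Longrightarrow> Ex n (\<lambda>h. G h * Y k h) = 0"
  using Ex_dep_le[OF dep_mult[OF dep_mono[of k G "Suc k"] dep_Y]] Mart by simp

lemma Yvar: "Ex (Suc k) (\<lambda>h. (Y k h)^2) \<le> 36 * CC^2 * Ex (Suc k) (Xk k)"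
proof -
  have "Ex (Suc k) (\<lambda>h. (Y k h)^2) = Ex k (\<lambda>h. EE (h k) (\<lambda>t. (ff t - ff (h k) - DD (h k))^2))"
    unfolding tower Y_def by simp
  also have "\<dots> \<le> Ex k (\<lambda>h. 36 * CC^2 * EE (h k) (XX (h k)))"
    by (intro Ex_mono var_bound Reach_Inv)
  also have "\<dots> = 36 * CC^2 * Ex (Suc k) (Xk k)"
    unfolding tower Xk_def Ex_cmult by simp
  finally show ?thesis .
qed

lemma Xsum_le: "h \<in> Reach n \<Longrightarrow> (\<Sum>k<n. Xk k h) \<le> KX"
  unfolding Xk_def
  by (rule path_X) (auto intro: Reach_props Reach_Inv step_Tr)

lemma ex_le: "ex n \<le> KX"
proof -
  have "ex n \<le> Ex n (\<lambda>_. KX)" unfolding ex_def by (intro Ex_mono Xsum_le)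
  also have "\<dots> = KX" using Ex_cmult[of n KX "\<lambda>_. 1"] Ex_one by simp
  finally show ?thesis .
qed

lemma ex_step: "ex (Suc n) = ex n + Ex (Suc n) (Xk n)"
proof -
  have "ex (Suc n) = Ex (Suc n) (\<lambda>h. (\<Sum>k<n. Xk k h) + Xk n h)" unfolding ex_def by simp
  also have "\<dots> = Ex (Suc n) (\<lambda>h. \<Sum>k<n. Xk k h) + Ex (Suc n) (Xk n)" by (rule Ex_add)
  also have "Ex (Suc n) (\<lambda>h. \<Sum>k<n. Xk k h) = ex n" unfolding ex_def by (rule Ex_dep[OF dep_Xsum])
  finally show ?thesis .
qed

lemma Xk_nonneg: "0 \<le> Xk k h" unfolding Xk_def by (rule XX_nonneg)

lemma ex_mono: "incseq ex"
proof (rule incseq_SucI)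
  fix n show "ex n \<le> ex (Suc n)" using ex_step[of n] Ex_nonneg[of "Suc n" "Xk n", OF Xk_nonneg] by simp
qed

lemma energy: "m \<le> K \<Longrightarrow> Ex K (\<lambda>h. (Sm m K h)^2) \<le> 36 * CC^2 * (ex K - ex m)"
proof (induction K rule: dec_induct)
  case base then show ?case by (simp add: Sm_def Ex_def)
next
  case (step K)
  have "Ex (Suc K) (\<lambda>h. (Sm m (Suc K) h)^2) = Ex (Suc K) (\<lambda>h. (Sm m K h)^2 + 2 * (Sm m K h * Y K h) + (Y K h)^2)"
    using step(1) by (intro Ex_cong) (simp add: Sm_def power2_eq_square algebra_simps)
  also have "\<dots> = Ex (Suc K) (\<lambda>h. (Sm m K h)^2) + 2 * Ex (Suc K) (\<lambda>h. Sm m K h * Y K h) + Ex (Suc K) (\<lambda>h. (Y K h)^2)"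
    by (simp add: Ex_add Ex_cmult)
  also have "Ex (Suc K) (\<lambda>h. Sm m K h * Y K h) = 0" by (rule Mart[OF dep_Sm])
  also have "Ex (Suc K) (\<lambda>h. (Sm m K h)^2) = Ex K (\<lambda>h. (Sm m K h)^2)"
    by (rule Ex_dep[OF dep_pow[OF dep_Sm]])
  finally have "Ex (Suc K) (\<lambda>h. (Sm m (Suc K) h)^2) \<le> 36 * CC^2 * (ex K - ex m) + 36 * CC^2 * Ex (Suc K) (Xk K)"
    using step(3) Yvar[of K] by simp
  then show ?case using ex_step[of K] by (simp add: algebra_simps)
qed

lemma Q_01: "0 \<le> Q m \<epsilon> K h" "Q m \<epsilon> K h \<le> 1" unfolding Q_def by auto

lemma maximal:
  assumes e: "\<epsilon> > 0"
  shows "m \<le> K \<Longrightarrow> \<epsilon>^2 * Ex K (Q m \<epsilon> K) \<le> Ex K (\<lambda>h. (Sm m K h)^2 * Q m \<epsilon> K h)"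
proof (induction K rule: dec_induct)
  case base
  have "Q m \<epsilon> m h = 0" for h using e by (simp add: Q_def Sm_def)
  then show ?case by (simp add: Ex_def)
next
  case (step K)
  define I where "I h = (if \<epsilon> \<le> \<bar>Sm m (Suc K) h\<bar> then 1 else (0::real))" for h
  have Qs: "Q m \<epsilon> (Suc K) h = Q m \<epsilon> K h + (1 - Q m \<epsilon> K h) * I h" for h
    using step(1) by (auto simp: Q_def I_def le_Suc_eq)
  have pt: "(Sm m (Suc K) h)^2 * Q m \<epsilon> (Suc K) h \<ge> (Sm m (Suc K) h)^2 * Q m \<epsilon> K h + \<epsilon>^2 * ((1 - Q m \<epsilon> K h) * I h)" for h
  proof -
    have "\<epsilon>^2 * I h \<le> (Sm m (Suc K) h)^2 * I h"
    proof (cases "\<epsilon> \<le> \<bar>Sm m (Suc K) h\<bar>")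
      case True
      then have "\<epsilon>^2 \<le> \<bar>Sm m (Suc K) h\<bar>^2" using e by (intro power_mono) auto
      then show ?thesis using True by (simp add: I_def)
    qed (simp add: I_def)
    then have "\<epsilon>^2 * I h * (1 - Q m \<epsilon> K h) \<le> (Sm m (Suc K) h)^2 * I h * (1 - Q m \<epsilon> K h)"
      using Q_01 by (rule_tac mult_right_mono) auto
    then show ?thesis unfolding Qs by (simp add: algebra_simps)
  qed
  have cross: "Ex (Suc K) (\<lambda>h. (Sm m (Suc K) h)^2 * Q m \<epsilon> K h) \<ge> Ex K (\<lambda>h. (Sm m K h)^2 * Q m \<epsilon> K h)"
  proof -
    have "Ex (Suc K) (\<lambda>h. (Sm m (Suc K) h)^2 * Q m \<epsilon> K h) =
        Ex (Suc K) (\<lambda>h. (Sm m K h)^2 * Q m \<epsilon> K h + 2 * ((Sm m K h * Q m \<epsilon> K h) * Y K h) + (Y K h)^2 * Q m \<epsilon> K h)"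
      using step(1) by (intro Ex_cong) (simp add: Sm_def power2_eq_square algebra_simps)
    also have "\<dots> = Ex (Suc K) (\<lambda>h. (Sm m K h)^2 * Q m \<epsilon> K h) + 2 * Ex (Suc K) (\<lambda>h. (Sm m K h * Q m \<epsilon> K h) * Y K h)
        + Ex (Suc K) (\<lambda>h. (Y K h)^2 * Q m \<epsilon> K h)"
      by (simp add: Ex_add Ex_cmult)
    also have "Ex (Suc K) (\<lambda>h. (Sm m K h * Q m \<epsilon> K h) * Y K h) = 0"
      by (rule Mart[OF dep_mult[OF dep_Sm dep_Q]])
    also have "Ex (Suc K) (\<lambda>h. (Sm m K h)^2 * Q m \<epsilon> K h) = Ex K (\<lambda>h. (Sm m K h)^2 * Q m \<epsilon> K h)"
      by (rule Ex_dep[OF dep_mult[OF dep_pow[OF dep_Sm] dep_Q]])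
    finally show ?thesis using Ex_nonneg[of "Suc K" "\<lambda>h. (Y K h)^2 * Q m \<epsilon> K h"] Q_01 by simp
  qed
  have "\<epsilon>^2 * Ex (Suc K) (Q m \<epsilon> (Suc K)) = \<epsilon>^2 * Ex (Suc K) (Q m \<epsilon> K) + \<epsilon>^2 * Ex (Suc K) (\<lambda>h. (1 - Q m \<epsilon> K h) * I h)"
    unfolding Qs Ex_add by (simp add: algebra_simps)
  also have "Ex (Suc K) (Q m \<epsilon> K) = Ex K (Q m \<epsilon> K)" by (rule Ex_dep[OF dep_Q])
  also have "\<epsilon>^2 * Ex K (Q m \<epsilon> K) + \<epsilon>^2 * Ex (Suc K) (\<lambda>h. (1 - Q m \<epsilon> K h) * I h)
      \<le> Ex (Suc K) (\<lambda>h. (Sm m (Suc K) h)^2 * Q m \<epsilon> K h) + Ex (Suc K) (\<lambda>h. \<epsilon>^2 * ((1 - Q m \<epsilon> K h) * I h))"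
    using step(3) cross by (simp add: Ex_cmult)
  also have "\<dots> = Ex (Suc K) (\<lambda>h. (Sm m (Suc K) h)^2 * Q m \<epsilon> K h + \<epsilon>^2 * ((1 - Q m \<epsilon> K h) * I h))"
    by (rule Ex_add[symmetric])
  also have "\<dots> \<le> Ex (Suc K) (\<lambda>h. (Sm m (Suc K) h)^2 * Q m \<epsilon> (Suc K) h)"
    by (intro Ex_mono pt)
  finally show ?case .
qed

lemma kolmogorov:
  assumes "\<epsilon> > 0" "m \<le> K"
  shows "\<epsilon>^2 * Ex K (Q m \<epsilon> K) \<le> 36 * CC^2 * (ex K - ex m)"
proof -
  have "\<epsilon>^2 * Ex K (Q m \<epsilon> K) \<le> Ex K (\<lambda>h. (Sm m K h)^2 * Q m \<epsilon> K h)" by (rule maximal[OF assms])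
  also have "\<dots> \<le> Ex K (\<lambda>h. (Sm m K h)^2)"
    using Q_01 by (intro Ex_mono) (simp add: mult_left_le)
  also have "\<dots> \<le> 36 * CC^2 * (ex K - ex m)" by (rule energy[OF assms(2)])
  finally show ?thesis .
qed

lemma Ex_Bsum: "Ex n (Bsum n) = ex n"
proof -
  have "Ex n (\<lambda>h. EE (h k) (XX (h k))) = Ex n (Xk k)" if "k < n" for k
  proof -
    have "Ex n (\<lambda>h. EE (h k) (XX (h k))) = Ex k (\<lambda>h. EE (h k) (XX (h k)))"
      by (rule Ex_dep_le) (use that in \<open>auto simp: dep_def\<close>)
    also have "\<dots> = Ex (Suc k) (Xk k)" unfolding tower Xk_def by simp
    also have "\<dots> = Ex n (Xk k)" by (rule Ex_dep_le[symmetric]) (use that dep_Xk in auto)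
    finally show ?thesis .
  qed
  then show ?thesis unfolding Bsum_def ex_def by (simp add: Ex_sum)
qed

lemma Bsum_nonneg: "0 \<le> Bsum n h"
  unfolding Bsum_def by (intro sum_nonneg) (use EE_mono[of _ "\<lambda>_. 0"] EE_const XX_nonneg in metis)

lemma markov_B: assumes "l > 0" shows "Ex n (\<lambda>h. if l \<le> Bsum n h then 1 else 0) \<le> KX / l"
proof -
  have "l * Ex n (\<lambda>h. if l \<le> Bsum n h then 1 else 0) = Ex n (\<lambda>h. l * (if l \<le> Bsum n h then 1 else 0))"
    by (simp add: Ex_cmult)
  also have "\<dots> \<le> Ex n (Bsum n)" by (intro Ex_mono) (auto simp: Bsum_nonneg)
  also have "\<dots> \<le> KX" using Ex_Bsum ex_le by simp
  finally show ?thesis using assms by (simp add: field_simps)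
qed

end

context proc begin

lemma Bsum_Suc: "Bsum (Suc n) h = Bsum n h + EE (h n) (XX (h n))" unfolding Bsum_def by simp
lemma EE_XX_nonneg: "0 \<le> EE s (XX s)" using EE_mono[of s "\<lambda>_. 0" "XX s"] EE_const XX_nonneg by metis

lemma path_conv:
  assumes inv: "\<And>k. Inv (\<rho> k)"
    and cau: "\<And>\<epsilon>. \<epsilon> > 0 \<Longrightarrow> \<exists>m. \<forall>j\<ge>m. \<bar>Sm m j \<rho>\<bar> < \<epsilon>"
    and bnd: "\<And>n. Bsum n \<rho> \<le> l"
  shows "convergent (\<lambda>n. ff (\<rho> n))"
proof -
  define N where "N n = Sm 0 n \<rho>" for n
  have split: "N j = N m + Sm m j \<rho>" if "m \<le> j" for m j
    unfolding N_def Sm_def using that by (simp add: sum.atLeastLessThan_concat)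
  have "Cauchy N"
  proof (rule CauchyI)
    fix e :: real assume e: "0 < e"
    obtain m where m: "\<forall>j\<ge>m. \<bar>Sm m j \<rho>\<bar> < e/2" using cau[of "e/2"] e by auto
    show "\<exists>M. \<forall>j\<ge>M. \<forall>k\<ge>M. norm (N j - N k) < e"
    proof (intro exI allI impI)
      fix j k assume "j \<ge> m" "k \<ge> m"
      then have "N j - N k = Sm m j \<rho> - Sm m k \<rho>" using split by simp
      moreover have "\<bar>Sm m j \<rho>\<bar> < e/2" "\<bar>Sm m k \<rho>\<bar> < e/2" using m \<open>j \<ge> m\<close> \<open>k \<ge> m\<close> by auto
      ultimately show "norm (N j - N k) < e" by simp
    qed
  qed
  then have cN: "convergent N" by (simp add: Cauchy_convergent_iff)
  then obtain KN where KN: "\<And>n. norm (N n) \<le> KN" using convergent_imp_Bseq Bseq_def by metis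
  have tele: "N n = ff (\<rho> n) - ff (\<rho> 0) - (\<Sum>k<n. DD (\<rho> k))" for n
  proof (induction n)
    case 0 then show ?case by (simp add: N_def Sm_def)
  next
    case (Suc n)
    have "N (Suc n) = N n + Y n \<rho>" unfolding N_def Sm_def by simp
    then show ?case using Suc by (simp add: Y_def)
  qed
  define b where "b n = 12 * CC * Bsum n \<rho>" for n
  have binc: "incseq b" unfolding b_def
    by (rule incseq_SucI) (use Bsum_Suc EE_XX_nonneg CC_nonneg in \<open>auto intro!: mult_left_mono\<close>)
  have cb: "convergent b"
  proof (rule Bseq_mono_convergent)
    show "Bseq b" using incseq_bounded[OF binc, of "12 * CC * l"] bnd CC_nonneg unfolding b_def
      by (auto intro: mult_left_mono)
    show "\<forall>m n. m \<le> n \<longrightarrow> b m \<le> b n" using binc unfolding incseq_def by auto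
  qed
  define P where "P n = ff (\<rho> n) - ff (\<rho> 0) - N n + b n" for n
  have Peq: "P n = (\<Sum>k<n. DD (\<rho> k) + 12 * CC * EE (\<rho> k) (XX (\<rho> k)))" for n
    unfolding P_def tele b_def Bsum_def by (simp add: sum.distrib sum_distrib_left)
  have Pinc: "incseq P"
  proof (rule incseq_SucI)
    fix n show "P n \<le> P (Suc n)" unfolding Peq using drift_low[OF inv, of n] by simp
  qed
  have cP: "convergent P"
  proof (rule Bseq_mono_convergent)
    have "P n \<le> CC + KN + 12 * CC * l" for n
    proof -
      have "ff (\<rho> n) \<le> CC" "0 \<le> ff (\<rho> 0)" using ff_bounds inv by auto
      moreover have "- N n \<le> KN" using KN[of n] by simp
      moreover have "b n \<le> 12 * CC * l" unfolding b_def using bnd CC_nonneg by (simp add: mult_left_mono)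
      ultimately show ?thesis unfolding P_def by linarith
    qed
    then show "Bseq P" using incseq_bounded[OF Pinc] by blast
    show "\<forall>m n. m \<le> n \<longrightarrow> P m \<le> P n" using Pinc unfolding incseq_def by auto
  qed
  have "(\<lambda>n. ff (\<rho> n)) = (\<lambda>n. (ff (\<rho> 0) + N n + P n) - b n)" unfolding P_def by (simp add: fun_eq_iff)
  moreover have "convergent (\<lambda>n. (ff (\<rho> 0) + N n + P n) - b n)"
    by (intro convergent_diff convergent_add convergent_const cN cP cb)
  ultimately show ?thesis by simp
qed

end

context proc begin

interpretation P: prob_space M by (rule M)

definition Set where "Set n P = (\<Union>h\<in>{h\<in>Reach n. P h}. Ev n h)"
definition hs where "hs n \<omega> = (\<lambda>k. if k \<le> n then V k \<omega> else v0)"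
definition GoodAll where "GoodAll = (\<Inter>n. Set n (\<lambda>_. True))"

lemma Set_sets: "Set n P \<in> sets M"
  unfolding Set_def using finite_Reach Ev_sets by (intro sets.finite_UN) auto

lemma Ev_disj: "h \<in> Reach n \<Longrightarrow> h' \<in> Reach n \<Longrightarrow> h \<noteq> h' \<Longrightarrow> Ev n h \<inter> Ev n h' = {}"
proof -
  assume h: "h \<in> Reach n" "h' \<in> Reach n" "h \<noteq> h'"
  then obtain k where k: "h k \<noteq> h' k" by auto
  then have "k \<le> n" using Reach_props(2)[OF h(1), of k] Reach_props(2)[OF h(2), of k] by (cases "k \<le> n") auto
  then show ?thesis using k unfolding Ev_def by auto
qed

lemma measure_Set: "measure M (Set n P) = Ex n (\<lambda>h. if P h then 1 else 0)"
proof -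
  have "measure M (Set n P) = (\<Sum>h\<in>{h\<in>Reach n. P h}. measure M (Ev n h))"
    unfolding Set_def
  proof (rule measure_finite_Union)
    show "finite {h \<in> Reach n. P h}" using finite_Reach by simp
    show "Ev n ` {h \<in> Reach n. P h} \<subseteq> sets M" using Ev_sets by auto
    show "disjoint_family_on (Ev n) {h \<in> Reach n. P h}" unfolding disjoint_family_on_def using Ev_disj by auto
    show "\<And>i. i \<in> {h \<in> Reach n. P h} \<Longrightarrow> emeasure M (Ev n i) \<noteq> \<infinity>" using P.emeasure_finite by auto
  qed
  also have "\<dots> = (\<Sum>h\<in>Reach n. if P h then Pr n h else 0)"
    unfolding Pr_def by (rule sum.inter_filter[OF finite_Reach])
  also have "\<dots> = (\<Sum>h\<in>Reach n. Pr n h * (if P h then 1 else 0))"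
    by (intro sum.cong) auto
  finally show ?thesis unfolding Ex_def .
qed

lemma Ev_hs: "\<omega> \<in> Ev n h \<Longrightarrow> h \<in> Reach n \<Longrightarrow> h = hs n \<omega>"
  unfolding Ev_def hs_def using Reach_props(2) by (auto simp: fun_eq_iff)

lemma Good_hs: assumes "\<omega> \<in> Set n (\<lambda>_. True)" shows "hs n \<omega> \<in> Reach n" "\<omega> \<in> Set n P \<longleftrightarrow> P (hs n \<omega>)"
proof -
  obtain h where h: "h \<in> Reach n" "\<omega> \<in> Ev n h" using assms unfolding Set_def by auto
  have e: "h = hs n \<omega>" by (rule Ev_hs[OF h(2) h(1)])
  then show "hs n \<omega> \<in> Reach n" using h by simp
  show "\<omega> \<in> Set n P \<longleftrightarrow> P (hs n \<omega>)"
  proof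
    assume "\<omega> \<in> Set n P"
    then obtain h' where "h' \<in> Reach n" "P h'" "\<omega> \<in> Ev n h'" unfolding Set_def by auto
    then show "P (hs n \<omega>)" using Ev_hs by metis
  next
    assume "P (hs n \<omega>)" then show "\<omega> \<in> Set n P" using h e unfolding Set_def by auto
  qed
qed

lemma GoodAll_sets: "GoodAll \<in> sets M" unfolding GoodAll_def using Set_sets by auto

lemma GoodAll_null: "space M - GoodAll \<in> null_sets M"
proof -
  have "space M - Set n (\<lambda>_. True) \<in> null_sets M" for n
  proof -
    have "measure M (space M - Set n (\<lambda>_. True)) = 0"
      using P.prob_compl[OF Set_sets] measure_Set[of n "\<lambda>_. True"] Ex_one by simp
    then show ?thesis using Set_sets by (auto simp: P.emeasure_eq_measure intro!: null_setsI)
  qed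
  then have "(\<Union>n. space M - Set n (\<lambda>_. True)) \<in> null_sets M" by blast
  moreover have "space M - GoodAll = (\<Union>n. space M - Set n (\<lambda>_. True))" unfolding GoodAll_def by auto
  ultimately show ?thesis by simp
qed

lemma zero_null: "A \<in> sets M \<Longrightarrow> measure M A \<le> 0 \<Longrightarrow> A \<in> null_sets M"
proof -
  assume A: "A \<in> sets M" "measure M A \<le> 0"
  then have "measure M A = 0" using measure_le_0_iff[of M A] by simp
  then show ?thesis using A by (auto simp: P.emeasure_eq_measure intro!: null_setsI)
qed

context fixes \<omega> assumes w: "\<omega> \<in> GoodAll" begin

lemma hs_Reach: "hs n \<omega> \<in> Reach n" using w Good_hs unfolding GoodAll_def by auto
lemma w_Set: "\<omega> \<in> Set n P \<longleftrightarrow> P (hs n \<omega>)" using w Good_hs unfolding GoodAll_def by auto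
lemma w_Inv: "Inv (V k \<omega>)" using Reach_Inv[OF hs_Reach, of k k] by (simp add: hs_def)
lemma hs_agree: "k \<le> n \<Longrightarrow> hs n \<omega> k = V k \<omega>" by (simp add: hs_def)
lemma Sm_hs: "j \<le> K \<Longrightarrow> Sm m j (hs K \<omega>) = Sm m j (\<lambda>k. V k \<omega>)"
  using dep_Sm[of j m] hs_agree unfolding dep_def by auto
lemma Q_hs: "Q m \<epsilon> K (hs K \<omega>) = Q m \<epsilon> K (\<lambda>k. V k \<omega>)"
  using dep_Q[of K m \<epsilon>] hs_agree unfolding dep_def by auto
lemma Bsum_hs: "Bsum n (hs n \<omega>) = Bsum n (\<lambda>k. V k \<omega>)"
  unfolding Bsum_def using hs_agree by (intro sum.cong) auto

end

end

context proc begin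

interpretation P: prob_space M by (rule M)

definition W1 where "W1 \<epsilon> m K = Set K (\<lambda>h. Q m \<epsilon> K h = 1) \<inter> GoodAll"
definition W2 where "W2 l n = Set n (\<lambda>h. l \<le> Bsum n h) \<inter> GoodAll"

lemma W1_sets: "W1 \<epsilon> m K \<in> sets M" unfolding W1_def using Set_sets GoodAll_sets by auto
lemma W2_sets: "W2 l n \<in> sets M" unfolding W2_def using Set_sets GoodAll_sets by auto

lemma W1_iff: "\<omega> \<in> GoodAll \<Longrightarrow> \<omega> \<in> W1 \<epsilon> m K \<longleftrightarrow> (\<exists>j\<in>{m..K}. \<epsilon> \<le> \<bar>Sm m j (\<lambda>k. V k \<omega>)\<bar>)"
  unfolding W1_def using w_Set Q_hs by (simp add: Q_def)

lemma W2_iff: "\<omega> \<in> GoodAll \<Longrightarrow> \<omega> \<in> W2 l n \<longleftrightarrow> l \<le> Bsum n (\<lambda>k. V k \<omega>)"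
  unfolding W2_def using w_Set Bsum_hs by simp

lemma W1_inc: "incseq (W1 \<epsilon> m)"
proof (rule incseq_SucI, rule subsetI)
  fix K \<omega> assume "\<omega> \<in> W1 \<epsilon> m K"
  then have w: "\<omega> \<in> GoodAll" unfolding W1_def by auto
  show "\<omega> \<in> W1 \<epsilon> m (Suc K)" using W1_iff[OF w] \<open>\<omega> \<in> W1 \<epsilon> m K\<close> by (auto simp: le_Suc_eq)
qed

lemma Bsum_mono: "(m::nat) \<le> n \<Longrightarrow> Bsum m h \<le> Bsum n h"
  unfolding Bsum_def using EE_XX_nonneg by (intro sum_mono2) (auto simp: finite_lessThan)

lemma W2_inc: "incseq (W2 l)"
proof (rule incseq_SucI, rule subsetI)
  fix n \<omega> assume "\<omega> \<in> W2 l n"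
  then have w: "\<omega> \<in> GoodAll" unfolding W2_def by auto
  have "l \<le> Bsum n (\<lambda>k. V k \<omega>)" using W2_iff[OF w] \<open>\<omega> \<in> W2 l n\<close> by simp
  also have "\<dots> \<le> Bsum (Suc n) (\<lambda>k. V k \<omega>)" by (rule Bsum_mono) simp
  finally show "\<omega> \<in> W2 l (Suc n)" using W2_iff[OF w] by simp
qed

lemma ex_lim: "\<exists>L. ex \<longlonglongrightarrow> L \<and> (\<forall>i. ex i \<le> L)"
proof -
  obtain L where "ex \<longlonglongrightarrow> L" "\<forall>i. ex i \<le> L" using incseq_convergent[OF ex_mono, of KX] ex_le by blast
  then show ?thesis by blast
qed

lemma W1_meas:
  assumes e: "\<epsilon> > 0" and L: "\<And>i. ex i \<le> L"
  shows "measure M (W1 \<epsilon> m K) \<le> 36 * CC^2 * (L - ex m) / \<epsilon>^2"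
proof -
  have "measure M (W1 \<epsilon> m K) \<le> measure M (Set K (\<lambda>h. Q m \<epsilon> K h = 1))"
    unfolding W1_def using Set_sets by (intro P.finite_measure_mono) auto
  also have "\<dots> = Ex K (Q m \<epsilon> K)" unfolding measure_Set
    by (intro Ex_cong) (auto simp: Q_def)
  also have "\<dots> \<le> 36 * CC^2 * (L - ex m) / \<epsilon>^2"
  proof (cases "m \<le> K")
    case True
    have "\<epsilon>^2 * Ex K (Q m \<epsilon> K) \<le> 36 * CC^2 * (L - ex m)"
    proof -
      have "36 * CC^2 * (ex K - ex m) \<le> 36 * CC^2 * (L - ex m)"
        using L[of K] by (intro mult_left_mono) auto
      then show ?thesis using kolmogorov[OF e True] by linarith
    qed
    then show ?thesis using e by (simp add: field_simps)
  next
    case False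
    then have "Q m \<epsilon> K h = 0" for h by (simp add: Q_def)
    then have "Ex K (Q m \<epsilon> K) = 0" by (simp add: Ex_def)
    moreover have "0 \<le> 36 * CC^2 * (L - ex m) / \<epsilon>^2" using L[of m] by simp
    ultimately show ?thesis by simp
  qed
  finally show ?thesis .
qed

lemma B1_null: assumes e: "\<epsilon> > 0" shows "(\<Inter>m. \<Union>K. W1 \<epsilon> m K) \<in> null_sets M"
proof -
  obtain L where L: "ex \<longlonglongrightarrow> L" "\<And>i. ex i \<le> L" using ex_lim by blast
  define c where "c = 36 * CC^2 / \<epsilon>^2"
  have U: "measure M (\<Union>K. W1 \<epsilon> m K) \<le> c * (L - ex m)" for m
  proof -
    have "(\<lambda>K. measure M (W1 \<epsilon> m K)) \<longlonglongrightarrow> measure M (\<Union>K. W1 \<epsilon> m K)"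
      using W1_sets W1_inc by (intro P.finite_Lim_measure_incseq) auto
    then show ?thesis
      using W1_meas[OF e L(2)] by (intro LIMSEQ_le_const2) (auto simp: c_def)
  qed
  have S: "(\<Inter>m. \<Union>K. W1 \<epsilon> m K) \<in> sets M" using W1_sets by auto
  have "measure M (\<Inter>m. \<Union>K. W1 \<epsilon> m K) \<le> c * (L - ex m)" for m
  proof -
    have "measure M (\<Inter>m. \<Union>K. W1 \<epsilon> m K) \<le> measure M (\<Union>K. W1 \<epsilon> m K)"
      using W1_sets by (intro P.finite_measure_mono) auto
    then show ?thesis using U[of m] by simp
  qed
  moreover have "(\<lambda>m. c * (L - ex m)) \<longlonglongrightarrow> c * (L - L)"
    by (intro tendsto_intros L(1))
  ultimately have "measure M (\<Inter>m. \<Union>K. W1 \<epsilon> m K) \<le> c * (L - L)"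
    by (intro LIMSEQ_le_const[of "\<lambda>m. c * (L - ex m)"]) auto
  then have "measure M (\<Inter>m. \<Union>K. W1 \<epsilon> m K) \<le> 0" by simp
  then show ?thesis by (rule zero_null[OF S])
qed

lemma B2_null: "(\<Inter>q. \<Union>n. W2 (real (Suc q)) n) \<in> null_sets M"
proof -
  have U: "measure M (\<Union>n. W2 (real (Suc q)) n) \<le> KX * inverse (real (Suc q))" for q
  proof -
    have "(\<lambda>n. measure M (W2 (real (Suc q)) n)) \<longlonglongrightarrow> measure M (\<Union>n. W2 (real (Suc q)) n)"
      using W2_sets W2_inc by (intro P.finite_Lim_measure_incseq) auto
    moreover have "measure M (W2 (real (Suc q)) n) \<le> KX * inverse (real (Suc q))" for n
    proof -
      have "measure M (W2 (real (Suc q)) n) \<le> measure M (Set n (\<lambda>h. real (Suc q) \<le> Bsum n h))"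
        unfolding W2_def using Set_sets by (intro P.finite_measure_mono) auto
      also have "\<dots> \<le> KX / real (Suc q)" unfolding measure_Set by (rule markov_B) simp
      finally show ?thesis by (simp add: divide_inverse)
    qed
    ultimately show ?thesis by (intro LIMSEQ_le_const2) auto
  qed
  have S: "(\<Inter>q. \<Union>n. W2 (real (Suc q)) n) \<in> sets M" using W2_sets by auto
  have "measure M (\<Inter>q. \<Union>n. W2 (real (Suc q)) n) \<le> KX * inverse (real (Suc q))" for q
  proof -
    have "measure M (\<Inter>q. \<Union>n. W2 (real (Suc q)) n) \<le> measure M (\<Union>n. W2 (real (Suc q)) n)"
      using W2_sets by (intro P.finite_measure_mono) auto
    then show ?thesis using U[of q] by simp
  qed
  moreover have "(\<lambda>q. KX * inverse (real (Suc q))) \<longlonglongrightarrow> KX * 0"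
    by (intro tendsto_intros LIMSEQ_inverse_real_of_nat)
  ultimately have "measure M (\<Inter>q. \<Union>n. W2 (real (Suc q)) n) \<le> KX * 0"
    by (intro LIMSEQ_le_const[of "\<lambda>q. KX * inverse (real (Suc q))"]) auto
  then have "measure M (\<Inter>q. \<Union>n. W2 (real (Suc q)) n) \<le> 0" by simp
  then show ?thesis by (rule zero_null[OF S])
qed

theorem main: "AE \<omega> in M. convergent (\<lambda>n. payoff adj a pW (normalise (V n \<omega>)))"
proof (rule AE_I')
  define N where "N = (space M - GoodAll) \<union> (\<Union>q. \<Inter>m. \<Union>K. W1 (inverse (real (Suc q))) m K) \<union> (\<Inter>q. \<Union>n. W2 (real (Suc q)) n)"
  have "\<And>q. (\<Inter>m. \<Union>K. W1 (inverse (real (Suc q))) m K) \<in> null_sets M"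
    by (rule B1_null) simp
  then have "(\<Union>q. \<Inter>m. \<Union>K. W1 (inverse (real (Suc q))) m K) \<in> null_sets M" by (rule null_sets_UN)
  then show "N \<in> null_sets M" unfolding N_def
    using GoodAll_null B2_null by (intro null_sets.Un)
  show "{\<omega> \<in> space M. \<not> convergent (\<lambda>n. payoff adj a pW (normalise (V n \<omega>)))} \<subseteq> N"
  proof (rule subsetI, rule ccontr)
    fix \<omega> assume o: "\<omega> \<in> {\<omega> \<in> space M. \<not> convergent (\<lambda>n. payoff adj a pW (normalise (V n \<omega>)))}" and nN: "\<omega> \<notin> N"
    have n1: "\<omega> \<notin> space M - GoodAll"
    proof
      assume "\<omega> \<in> space M - GoodAll" then have "\<omega> \<in> N" unfolding N_def by (intro UnI1)
      then show False using nN by contradiction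
    qed
    have n2: "\<omega> \<notin> (\<Union>q. \<Inter>m. \<Union>K. W1 (inverse (real (Suc q))) m K)"
    proof
      assume "\<omega> \<in> (\<Union>q. \<Inter>m. \<Union>K. W1 (inverse (real (Suc q))) m K)"
      then have "\<omega> \<in> N" unfolding N_def by (intro UnI1 UnI2)
      then show False using nN by contradiction
    qed
    have n3: "\<omega> \<notin> (\<Inter>q. \<Union>n. W2 (real (Suc q)) n)"
    proof
      assume "\<omega> \<in> (\<Inter>q. \<Union>n. W2 (real (Suc q)) n)"
      then have "\<omega> \<in> N" unfolding N_def by (intro UnI2)
      then show False using nN by contradiction
    qed
    have w: "\<omega> \<in> GoodAll" using o n1 by simp
    have c1: "\<forall>q. \<exists>m. \<forall>K. \<omega> \<notin> W1 (inverse (real (Suc q))) m K" using n2 by simp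
    have c2: "\<exists>q. \<forall>n. \<omega> \<notin> W2 (real (Suc q)) n" using n3 by simp
    define \<rho> where "\<rho> = (\<lambda>k. V k \<omega>)"
    obtain q where q: "\<forall>n. \<omega> \<notin> W2 (real (Suc q)) n" using c2 by blast
    have "convergent (\<lambda>n. ff (\<rho> n))"
    proof (rule path_conv)
      show "Inv (\<rho> k)" for k unfolding \<rho>_def by (rule w_Inv[OF w])
      show "\<exists>m. \<forall>j\<ge>m. \<bar>Sm m j \<rho>\<bar> < \<epsilon>" if e: "\<epsilon> > 0" for \<epsilon>
      proof -
        obtain n where n: "n > 0" "inverse (real n) < \<epsilon>" using ex_inverse_of_nat_less[OF e] by auto
        obtain m where m: "\<forall>K. \<omega> \<notin> W1 (inverse (real (Suc (n - 1)))) m K" using c1 by blast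
        have sn: "real (Suc (n - 1)) = real n" using n by simp
        have "\<bar>Sm m j \<rho>\<bar> < \<epsilon>" if "j \<ge> m" for j
        proof -
          have "\<omega> \<notin> W1 (inverse (real n)) m j" using m sn by metis
          then have "\<not> inverse (real n) \<le> \<bar>Sm m j \<rho>\<bar>" using W1_iff[OF w] that unfolding \<rho>_def by auto
          then show ?thesis using n by simp
        qed
        then show ?thesis by blast
      qed
      show "Bsum n \<rho> \<le> real (Suc q)" for n
      proof -
        have "\<not> real (Suc q) \<le> Bsum n \<rho>" using q W2_iff[OF w, of "real (Suc q)" n] unfolding \<rho>_def by simp
        then show ?thesis by simp
      qed
    qed
    moreover have "payoff adj a pW (normalise (V n \<omega>)) = ff (\<rho> n)" for n
      unfolding \<rho>_def by (rule payoff_eq[OF w_Inv[OF w]])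
    ultimately show False using o by simp
  qed
qed

end

theorem theorem1:
  fixes adj :: "'v::finite \<Rightarrow> 'v \<Rightarrow> bool"
    and a :: "'v \<Rightarrow> 'v \<Rightarrow> real"
    and pW :: "'v set \<Rightarrow> real"
    and v0 :: "'v \<Rightarrow> 'v \<Rightarrow> real"
    and M :: "'w measure"
    and V :: "nat \<Rightarrow> 'w \<Rightarrow> ('v \<Rightarrow> 'v \<Rightarrow> real)"
  assumes adj_sym: "\<And>i j. adj i j \<longleftrightarrow> adj j i"
    and adj_irrefl: "\<And>i. \<not> adj i i"
    and a_nonneg: "\<And>i j. a i j \<ge> 0"
    and a_sym: "\<And>i j. a i j = a j i"
    and a_adj: "\<And>i j. a i j > 0 \<Longrightarrow> adj i j"
    and pW_nonneg: "\<And>W. pW W \<ge> 0"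
    and pW_sum: "(\<Sum>W\<in>UNIV. pW W) = 1"
    and nondeg: "\<exists>i j. a i j * pedge adj pW i j > 0"
    and v0_sym: "\<And>i j. v0 i j = v0 j i"
    and v0_nonneg: "\<And>i j. v0 i j \<ge> 0"
    and v0_pos: "\<And>i j. v0 i j > 0 \<longleftrightarrow> adj i j"
    and M: "prob_space M"
    and V_meas: "\<And>n s. {\<omega> \<in> space M. V n \<omega> = s} \<in> sets M"
    and V_init: "measure M {\<omega> \<in> space M. V 0 \<omega> = v0} = 1"
    and V_markov: "\<And>n (s :: nat \<Rightarrow> ('v \<Rightarrow> 'v \<Rightarrow> real)) t.
        measure M {\<omega> \<in> space M. (\<forall>k\<le>n. V k \<omega> = s k) \<and> V (Suc n) \<omega> = t}
        = measure M {\<omega> \<in> space M. \<forall>k\<le>n. V k \<omega> = s k} * pmf (step adj a pW (s n)) t"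
  shows "AE \<omega> in M. convergent (\<lambda>n. payoff adj a pW (normalise (V n \<omega>)))"
proof -
  interpret proc adj a pW v0 M V
    by (intro proc.intro rls.intro proc_axioms.intro) (fact assms)+
  show ?thesis by (rule main)
qed

end
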